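(* Let $X_0,X_1,X_2,\dots$ be a Markov chain on a measurable space $(M,\mathcal{B})$ with one-step transition probability $P(x,\cdot)$ and $n$-step transition probabilities $P(n,x,\cdot)$, and suppose there exist a probability measure $m$ on $(M,\mathcal{B})$, an integer $n_0\ge1$ and a constant $C>0$ such that for all $x\in M$ and all $\Gamma\in\mathcal{B}$, $$P(x,\Gamma)\le C\,m(\Gamma)\quad\text{and}\quad P(n_0,x,\Gamma)\ge C^{-1}m(\Gamma).$$ Let $\mu$ be the unique invariant probability measure of this chain. Let $\ell\ge1$ and let $q_1,\dots,q_\ell$ be increasing integer-valued functions on the positive integers with $l\le q_1(l)<q_2(l)<\dots<q_\ell(l)$ and $$\lim_{l\to\infty}\big(q_{i+1}(l)-q_i(l)\big)=\infty\quad\text{for all } i=1,\dots,\ell-1.$$ Let $\Gamma_n\in\mathcal{B}$ be sets with $\lim_{n\to\infty}n(\mu(\Gamma_n))^\ell=\lambda>0$, and set $$S_n=\sum_{l=1}^n\prod_{j=1}^\ell \mathbb{I}_{\Gamma_n}(X_{q_j(l)}).$$ Then for any initial distribution $\nu$, under $P_\nu$ the random variables $S_n$ converge in distribution as $n\to\infty$ to a Poisson random variable with parameter $\lambda$, i.e. $\lim_{n\to\infty}P_\nu\{S_n=k\}=e^{-\lambda}\lambda^k/k!$ for all $k=0,1,2,\dots$.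
   Context: $\mathbb{I}_\Gamma$ denotes the indicator function of a set $\Gamma$. For $x\in M$, $P_x$ denotes the probability on the path space of the chain started at $X_0=x$; for a probability measure $\nu$ on $M$, $P_\nu=\int_M P_x\,d\nu(x)$. Under the stated (Doeblin-type) conditions the chain has a unique invariant probability measure $\mu$, i.e. $\int_M P(x,\Gamma)\,d\mu(x)=\mu(\Gamma)$ for all $\Gamma\in\mathcal{B}$. *)

theory Defs
  imports "HOL-Probability.Probability"
begin

definition transition_kernel :: "'a measure \<Rightarrow> ('a \<Rightarrow> 'a measure) \<Rightarrow> bool" where
  "transition_kernel M K \<longleftrightarrow> K \<in> M \<rightarrow>\<^sub>M prob_algebra M"

primrec kstep :: "'a measure \<Rightarrow> ('a \<Rightarrow> 'a measure) \<Rightarrow> nat \<Rightarrow> 'a \<Rightarrow> 'a measure" where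
  "kstep M K 0 x = return M x"
| "kstep M K (Suc n) x = bind (kstep M K n x) K"

text \<open>X is a Markov chain on the probability space P with state space M, transition
  kernel K and initial distribution nu: the law of X 0 is nu and for every n the
  conditional probability of X (n+1) in A given X 0, ..., X n is K (X n) A
  (stated on the generating cylinder events).\<close>
definition markov_chain ::
  "'w measure \<Rightarrow> 'a measure \<Rightarrow> ('a \<Rightarrow> 'a measure) \<Rightarrow> 'a measure \<Rightarrow> (nat \<Rightarrow> 'w \<Rightarrow> 'a) \<Rightarrow> bool" where
  "markov_chain P M K \<nu> X \<longleftrightarrow>
     prob_space P \<and> (\<forall>i. X i \<in> P \<rightarrow>\<^sub>M M) \<and> distr P M (X 0) = \<nu> \<and>
     (\<forall>n A. (\<forall>i. A i \<in> sets M) \<longrightarrow>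
        measure P {\<omega> \<in> space P. \<forall>i\<le>Suc n. X i \<omega> \<in> A i} =
        (\<integral>\<omega>. indicator {\<omega>. \<forall>i\<le>n. X i \<omega> \<in> A i} \<omega> * measure (K (X n \<omega>)) (A (Suc n)) \<partial>P))"

end

theory Submission
  imports Defs
begin

locale kern =
  fixes M :: "'a measure" and K :: "'a \<Rightarrow> 'a measure"
  assumes Kmeas: "K \<in> M \<rightarrow>\<^sub>M prob_algebra M"
begin

lemma kstep_meas: "kstep M K n \<in> M \<rightarrow>\<^sub>M prob_algebra M"
proof (induction n)
  case 0
  have "kstep M K 0 = return M" by (simp add: fun_eq_iff)
  then show ?case by simp
next
  case (Suc n)
  have "kstep M K (Suc n) = (\<lambda>x. bind (kstep M K n x) K)" by (simp add: fun_eq_iff)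
  then show ?case using measurable_bind_prob_space[OF Suc Kmeas] by simp
qed

lemma kstep_sub: "kstep M K n \<in> M \<rightarrow>\<^sub>M subprob_algebra M"
  using kstep_meas measurable_prob_algebraD by blast

lemma K_sub: "K \<in> M \<rightarrow>\<^sub>M subprob_algebra M"
  using Kmeas measurable_prob_algebraD by blast

lemma kstep_space: "x \<in> space M \<Longrightarrow> kstep M K n x \<in> space (prob_algebra M)"
  using measurable_space[OF kstep_meas] by blast

lemma kstep_prob: "x \<in> space M \<Longrightarrow> prob_space (kstep M K n x)"
  using kstep_space by (simp add: space_prob_algebra)

lemma kstep_sets: "x \<in> space M \<Longrightarrow> sets (kstep M K n x) = sets M"
  using kstep_space by (simp add: space_prob_algebra)

lemma kstep_spc: "x \<in> space M \<Longrightarrow> space (kstep M K n x) = space M"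
  using kstep_sets sets_eq_imp_space_eq by blast

lemma K_prob: "x \<in> space M \<Longrightarrow> prob_space (K x)"
  using measurable_space[OF Kmeas] by (auto simp add: space_prob_algebra)

lemma K_sets: "x \<in> space M \<Longrightarrow> sets (K x) = sets M"
  using measurable_space[OF Kmeas] by (auto simp add: space_prob_algebra)

lemma kstep_add: "x \<in> space M \<Longrightarrow> kstep M K (a + b) x = bind (kstep M K a x) (kstep M K b)"
proof (induction b)
  case 0
  have "kstep M K 0 = return M" by (simp add: fun_eq_iff)
  then have "bind (kstep M K a x) (kstep M K 0) = bind (kstep M K a x) (return M)"
    by simp
  also have "\<dots> = kstep M K a x" by (rule bind_return'') (use 0 kstep_sets in auto)
  finally show ?case by (metis add_0_right)
next
  case (Suc b)
  have "kstep M K (a + Suc b) x = bind (bind (kstep M K a x) (kstep M K b)) K"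
    using Suc by simp
  also have "\<dots> = bind (kstep M K a x) (\<lambda>y. bind (kstep M K b y) K)"
  proof (rule bind_assoc[OF _ K_sub])
    show "kstep M K b \<in> kstep M K a x \<rightarrow>\<^sub>M subprob_algebra M"
      using kstep_sub measurable_cong_sets[OF kstep_sets[OF Suc.prems] refl] by blast
  qed
  also have "(\<lambda>y. bind (kstep M K b y) K) = kstep M K (Suc b)" by (simp add: fun_eq_iff)
  finally show ?case .
qed

lemma integral_bind_nn:
  assumes N: "N \<in> space (prob_algebra M)" and f: "f \<in> M \<rightarrow>\<^sub>M prob_algebra M"
    and g: "(g :: 'a \<Rightarrow> real) \<in> borel_measurable M" and gb: "\<And>y. y \<in> space M \<Longrightarrow> 0 \<le> g y \<and> g y \<le> B"
  shows "(\<integral>y. g y \<partial>bind N f) = (\<integral>x. (\<integral>y. g y \<partial>f x) \<partial>N)"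
proof -
  have sN: "sets N = sets M" "prob_space N" using N by (auto simp: space_prob_algebra)
  then have spN: "space N = space M" using sets_eq_imp_space_eq by blast
  have sb: "sets (bind N f) = sets M" using sets_bind'[OF N f] .
  then have spb: "space (bind N f) = space M" using sets_eq_imp_space_eq by blast
  have fsub: "f \<in> N \<rightarrow>\<^sub>M subprob_algebra M"
    using measurable_prob_algebraD[OF f] measurable_cong_sets[OF sN(1) refl] by blast
  have fN: "f \<in> N \<rightarrow>\<^sub>M prob_algebra M"
    using f measurable_cong_sets[OF sN(1) refl] by blast
  have gb': "g \<in> borel_measurable (bind N f)" using g measurable_cong_sets[OF sb refl] by blast
  have fx: "x \<in> space M \<Longrightarrow> prob_space (f x) \<and> sets (f x) = sets M" for x
    using measurable_space[OF f, of x] by (auto simp: space_prob_algebra)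
  have "(\<integral>y. g y \<partial>bind N f) = enn2real (\<integral>\<^sup>+y. ennreal (g y) \<partial>bind N f)"
    by (rule integral_eq_nn_integral[OF gb']) (use gb spb in auto)
  also have "(\<integral>\<^sup>+y. ennreal (g y) \<partial>bind N f) = (\<integral>\<^sup>+x. \<integral>\<^sup>+y. ennreal (g y) \<partial>f x \<partial>N)"
    by (rule nn_integral_bind[OF _ fsub]) (use g in measurable)
  also have "\<dots> = (\<integral>\<^sup>+x. ennreal (\<integral>y. g y \<partial>f x) \<partial>N)"
  proof (rule nn_integral_cong)
    fix x assume x: "x \<in> space N"
    then have x': "x \<in> space M" using spN by simp
    interpret fx: prob_space "f x" using fx[OF x'] by simp
    have sfx: "space (f x) = space M" using fx[OF x'] sets_eq_imp_space_eq by blast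
    have gfx: "g \<in> borel_measurable (f x)" using g measurable_cong_sets fx[OF x'] by blast
    show "(\<integral>\<^sup>+y. ennreal (g y) \<partial>f x) = ennreal (\<integral>y. g y \<partial>f x)"
    proof (rule nn_integral_eq_integral)
      show "integrable (f x) g"
        by (rule fx.integrable_const_bound[where B=B]) (use gb sfx gfx in auto)
    qed (use gb sfx in auto)
  qed
  also have "enn2real \<dots> = (\<integral>x. (\<integral>y. g y \<partial>f x) \<partial>N)"
  proof (rule integral_eq_nn_integral[symmetric])
    show "(\<lambda>x. \<integral>y. g y \<partial>f x) \<in> borel_measurable N"
      using measurable_compose[OF fsub integral_measurable_subprob_algebra[OF g]] by simp
    show "AE x in N. 0 \<le> (\<integral>y. g y \<partial>f x)"
    proof (rule AE_I2)
      fix x assume "x \<in> space N"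
      then have x': "x \<in> space M" using spN by simp
      have sfx: "space (f x) = space M" using fx[OF x'] sets_eq_imp_space_eq by blast
      show "0 \<le> (\<integral>y. g y \<partial>f x)" by (rule integral_nonneg_AE, rule AE_I2) (use gb sfx in auto)
    qed
  qed
  finally show ?thesis .
qed

end

lemma abs_bnd: "a \<le> (z::real) \<Longrightarrow> z \<le> b \<Longrightarrow> \<bar>z\<bar> \<le> \<bar>a\<bar> + \<bar>b\<bar>"
  by (simp add: abs_if)

lemma integral_lower_measure:
  fixes h :: "'a \<Rightarrow> real"
  assumes N: "prob_space N" and m: "prob_space m" and sN: "sets N = sets m" and c: "c \<ge> 0"
    and le: "\<And>A. A \<in> sets m \<Longrightarrow> c * measure m A \<le> measure N A"
    and h: "h \<in> borel_measurable m" and hb: "\<And>y. y \<in> space m \<Longrightarrow> 0 \<le> h y \<and> h y \<le> B"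
  shows "c * (\<integral>y. h y \<partial>m) \<le> (\<integral>y. h y \<partial>N)"
proof -
  interpret N: prob_space N by fact
  interpret m: prob_space m by fact
  have spN: "space N = space m" using sN sets_eq_imp_space_eq by blast
  have hN: "h \<in> borel_measurable N" using h measurable_cong_sets[OF sN refl] by blast
  have "emeasure (scale_measure (ennreal c) m) \<le> emeasure N"
  proof (rule le_funI)
    fix A
    show "emeasure (scale_measure (ennreal c) m) A \<le> emeasure N A"
    proof (cases "A \<in> sets m")
      case True
      then have "ennreal c * emeasure m A = ennreal (c * measure m A)"
        using c by (simp add: m.emeasure_eq_measure ennreal_mult)
      also have "\<dots> \<le> ennreal (measure N A)" using le[OF True] by simp
      also have "\<dots> = emeasure N A" by (simp add: N.emeasure_eq_measure)
      finally have "ennreal c * emeasure m A \<le> emeasure N A" .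
      then show ?thesis by simp
    next
      case False
      then show ?thesis by (simp add: emeasure_notin_sets)
    qed
  qed
  then have "scale_measure (ennreal c) m \<le> N"
    by (simp add: le_measure_iff space_scale_measure spN sN)
  then have "(\<integral>\<^sup>+y. ennreal (h y) \<partial>scale_measure (ennreal c) m) \<le> (\<integral>\<^sup>+y. ennreal (h y) \<partial>N)"
    by (intro nn_integral_mono_measure) (simp_all add: sN)
  then have 1: "ennreal c * (\<integral>\<^sup>+y. ennreal (h y) \<partial>m) \<le> (\<integral>\<^sup>+y. ennreal (h y) \<partial>N)"
    by (subst (asm) nn_integral_scale_measure) (use h in auto)
  have im: "integrable m h" by (rule m.integrable_const_bound[where B=B]) (use hb h in auto)
  have iN: "integrable N h" by (rule N.integrable_const_bound[where B=B]) (use hb hN spN in auto)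
  have e1: "(\<integral>\<^sup>+y. ennreal (h y) \<partial>m) = ennreal (\<integral>y. h y \<partial>m)"
    by (rule nn_integral_eq_integral[OF im]) (use hb in auto)
  have e2: "(\<integral>\<^sup>+y. ennreal (h y) \<partial>N) = ennreal (\<integral>y. h y \<partial>N)"
    by (rule nn_integral_eq_integral[OF iN]) (use hb spN in auto)
  have hm0: "0 \<le> (\<integral>y. h y \<partial>m)" by (rule integral_nonneg_AE, rule AE_I2) (use hb in auto)
  have "ennreal (c * (\<integral>y. h y \<partial>m)) \<le> ennreal (\<integral>y. h y \<partial>N)"
    using 1 unfolding e1 e2 using c hm0 by (simp add: ennreal_mult)
  moreover have "0 \<le> (\<integral>y. h y \<partial>N)" by (rule integral_nonneg_AE, rule AE_I2) (use hb spN in auto)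
  ultimately show ?thesis by (auto simp add: ennreal_le_iff2)
qed

lemma prob_integral_bounds:
  fixes f :: "'a \<Rightarrow> real"
  assumes N: "prob_space N" and f: "f \<in> borel_measurable N" and b: "\<And>y. y \<in> space N \<Longrightarrow> a \<le> f y \<and> f y \<le> b"
  shows "a \<le> (\<integral>y. f y \<partial>N) \<and> (\<integral>y. f y \<partial>N) \<le> b"
proof -
  interpret prob_space N by fact
  have i: "integrable N f" by (rule integrable_const_bound[where B="\<bar>a\<bar> + \<bar>b\<bar>"]) (use b f abs_bnd in \<open>auto intro!: AE_I2\<close>)
  show ?thesis using i b by (auto intro!: integral_ge_const integral_le_const AE_I2)
qed

context kern begin

definition Tk :: "nat \<Rightarrow> ('a \<Rightarrow> real) \<Rightarrow> 'a \<Rightarrow> real" where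
  "Tk s g x = (\<integral>y. g y \<partial>kstep M K s x)"

lemma Tk_meas: "g \<in> borel_measurable M \<Longrightarrow> Tk s g \<in> borel_measurable M"
  unfolding Tk_def
  using measurable_compose[OF kstep_sub integral_measurable_subprob_algebra[of g M]] by simp

lemma Tk_range: assumes g: "g \<in> borel_measurable M" and b: "\<And>y. y \<in> space M \<Longrightarrow> a \<le> g y \<and> g y \<le> b"
  and x: "x \<in> space M" shows "a \<le> Tk s g x \<and> Tk s g x \<le> b"
proof -
  have "g \<in> borel_measurable (kstep M K s x)"
    using measurable_cong_sets[OF kstep_sets[OF x] refl] g by blast
  then show ?thesis unfolding Tk_def
    by (rule prob_integral_bounds[OF kstep_prob[OF x]]) (use b kstep_spc[OF x] in auto)
qed

lemma Tk_add: assumes g: "g \<in> borel_measurable M" and b: "\<And>y. y \<in> space M \<Longrightarrow> 0 \<le> g y \<and> g y \<le> B"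
  and x: "x \<in> space M" shows "Tk (a + c) g x = Tk a (Tk c g) x"
  unfolding Tk_def kstep_add[OF x]
  by (rule integral_bind_nn[OF kstep_space[OF x] kstep_meas g b])

end

locale doeb = kern +
  fixes m :: "'a measure" and n0 :: nat and C :: real and mu :: "'a measure"
  assumes m: "prob_space m" "sets m = sets M"
    and n0: "n0 \<ge> 1" and C: "C > 0"
    and upper: "\<And>x A. x \<in> space M \<Longrightarrow> A \<in> sets M \<Longrightarrow> measure (K x) A \<le> C * measure m A"
    and lower: "\<And>x A. x \<in> space M \<Longrightarrow> A \<in> sets M \<Longrightarrow> measure (kstep M K n0 x) A \<ge> measure m A / C"
    and mu: "prob_space mu" "sets mu = sets M"
    and mu_inv: "\<And>A. A \<in> sets M \<Longrightarrow> (\<integral>x. measure (K x) A \<partial>mu) = measure mu A"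
begin

lemma spm: "space m = space M" using m sets_eq_imp_space_eq by blast
lemma spmu: "space mu = space M" using mu sets_eq_imp_space_eq by blast
lemma spM_ne: "space M \<noteq> {}" using prob_space.not_empty[OF m(1)] spm by simp

lemma C_ge1: "C \<ge> 1"
proof -
  obtain x where x: "x \<in> space M" using spM_ne by blast
  have "measure (K x) (space M) = 1"
    using K_prob[OF x] K_sets[OF x] sets_eq_imp_space_eq prob_space.prob_space by metis
  moreover have "measure m (space M) = 1" using m(1) spm prob_space.prob_space by metis
  ultimately show ?thesis using upper[OF x, of "space M"] by simp
qed

lemma contract:
  assumes g: "g \<in> borel_measurable M" and b: "\<And>y. y \<in> space M \<Longrightarrow> a \<le> g y \<and> g y \<le> b"
  shows "\<exists>a' b'. a \<le> a' \<and> b' \<le> b \<and> b' - a' = (1 - 1/C) * (b - a) \<and>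
     (\<forall>x\<in>space M. a' \<le> Tk n0 g x \<and> Tk n0 g x \<le> b')"
proof -
  interpret m: prob_space m by (rule m(1))
  have gm: "g \<in> borel_measurable m" using g measurable_cong_sets[OF m(2) refl] by blast
  have im: "integrable m g"
    by (rule m.integrable_const_bound[where B="\<bar>a\<bar> + \<bar>b\<bar>"]) (use b gm spm abs_bnd in \<open>auto intro!: AE_I2\<close>)
  define a' where "a' = a + (\<integral>y. g y - a \<partial>m) / C"
  define b' where "b' = b - (\<integral>y. b - g y \<partial>m) / C"
  have ia: "(\<integral>y. g y - a \<partial>m) = (\<integral>y. g y \<partial>m) - a" using im by (simp add: m.prob_space)
  have ib: "(\<integral>y. b - g y \<partial>m) = b - (\<integral>y. g y \<partial>m)" using im by (simp add: m.prob_space)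
  have nn1: "0 \<le> (\<integral>y. g y - a \<partial>m)" by (rule integral_nonneg_AE, rule AE_I2) (use b spm in auto)
  have nn2: "0 \<le> (\<integral>y. b - g y \<partial>m)" by (rule integral_nonneg_AE, rule AE_I2) (use b spm in auto)
  have "b' - a' = (1 - 1/C) * (b - a)"
    unfolding a'_def b'_def ia ib using C by (simp add: field_simps)
  moreover have "a \<le> a'" "b' \<le> b" unfolding a'_def b'_def using nn1 nn2 C by auto
  moreover have "a' \<le> Tk n0 g x \<and> Tk n0 g x \<le> b'" if x: "x \<in> space M" for x
  proof -
    let ?N = "kstep M K n0 x"
    interpret N: prob_space ?N by (rule kstep_prob[OF x])
    have sN: "sets ?N = sets m" using kstep_sets[OF x] m(2) by simp
    have spN: "space ?N = space M" using kstep_spc[OF x] .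
    have gN: "g \<in> borel_measurable ?N" using g measurable_cong_sets[OF kstep_sets[OF x] refl] by blast
    have iN: "integrable ?N g"
      by (rule N.integrable_const_bound[where B="\<bar>a\<bar> + \<bar>b\<bar>"]) (use b gN spN abs_bnd in \<open>auto intro!: AE_I2\<close>)
    have le: "\<And>A. A \<in> sets m \<Longrightarrow> (1/C) * measure m A \<le> measure ?N A"
      using lower[OF x] m(2) by simp
    have l1: "(1/C) * (\<integral>y. g y - a \<partial>m) \<le> (\<integral>y. g y - a \<partial>?N)"
      by (rule integral_lower_measure[OF kstep_prob[OF x] m(1) sN _ le, where B="b - a"])
         (use C gm b spm in auto)
    have l2: "(1/C) * (\<integral>y. b - g y \<partial>m) \<le> (\<integral>y. b - g y \<partial>?N)"
      by (rule integral_lower_measure[OF kstep_prob[OF x] m(1) sN _ le, where B="b - a"])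
         (use C gm b spm in auto)
    have "(\<integral>y. g y - a \<partial>?N) = Tk n0 g x - a" unfolding Tk_def using iN by (simp add: N.prob_space)
    moreover have "(\<integral>y. b - g y \<partial>?N) = b - Tk n0 g x" unfolding Tk_def using iN by (simp add: N.prob_space)
    ultimately show ?thesis using l1 l2 unfolding a'_def b'_def by auto
  qed
  ultimately show ?thesis by blast
qed

lemma iterate:
  assumes g: "g \<in> borel_measurable M" and b: "\<And>y. y \<in> space M \<Longrightarrow> a \<le> g y \<and> g y \<le> b" and a0: "0 \<le> a"
  shows "\<exists>a' b'. a \<le> a' \<and> b' \<le> b \<and> b' - a' \<le> (1 - 1/C)^k * (b - a) \<and>
     (\<forall>x\<in>space M. a' \<le> Tk (k * n0 + j) g x \<and> Tk (k * n0 + j) g x \<le> b')"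
proof (induction k)
  case 0
  show ?case using Tk_range[OF g b] by (intro exI[of _ a] exI[of _ b]) auto
next
  case (Suc k)
  then obtain a' b' where ab: "a \<le> a'" "b' \<le> b" "b' - a' \<le> (1 - 1/C)^k * (b - a)"
    and r: "\<forall>x\<in>space M. a' \<le> Tk (k * n0 + j) g x \<and> Tk (k * n0 + j) g x \<le> b'" by blast
  have hm: "Tk (k * n0 + j) g \<in> borel_measurable M" by (rule Tk_meas[OF g])
  obtain a'' b'' where ab2: "a' \<le> a''" "b'' \<le> b'" "b'' - a'' = (1 - 1/C) * (b' - a')"
    and r2: "\<forall>x\<in>space M. a'' \<le> Tk n0 (Tk (k * n0 + j) g) x \<and> Tk n0 (Tk (k * n0 + j) g) x \<le> b''"
    using contract[OF hm] r by blast
  have eq: "Tk (Suc k * n0 + j) g x = Tk n0 (Tk (k * n0 + j) g) x" if x: "x \<in> space M" for x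
  proof -
    have e: "Suc k * n0 + j = n0 + (k * n0 + j)" by simp
    have "Tk (n0 + (k * n0 + j)) g x = Tk n0 (Tk (k * n0 + j) g) x"
    proof -
      have bb: "\<And>y. y \<in> space M \<Longrightarrow> 0 \<le> g y \<and> g y \<le> b" using b a0 by fastforce
      show ?thesis by (rule Tk_add[OF g bb x])
    qed
    then show ?thesis unfolding e .
  qed
  have c0: "0 \<le> 1 - 1/C" using C_ge1 by (simp add: field_simps)
  have "b'' - a'' \<le> (1 - 1/C) * ((1 - 1/C)^k * (b - a))"
    unfolding ab2(3) by (rule mult_left_mono[OF ab(3) c0])
  then show ?case using ab ab2 r2 eq by (intro exI[of _ a''] exI[of _ b'']) auto
qed

end

context doeb begin

lemma mu_space: "mu \<in> space (prob_algebra M)" using mu by (simp add: space_prob_algebra)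

lemma ind_measure: "prob_space N \<Longrightarrow> sets N = sets M \<Longrightarrow> G \<in> sets M \<Longrightarrow> (\<integral>y. indicator G y \<partial>N) = measure N G"
  by (simp add: sets.Int_space_eq2)

lemma measure_bind_nn:
  assumes N: "N \<in> space (prob_algebra M)" and f: "f \<in> M \<rightarrow>\<^sub>M prob_algebra M" and G: "G \<in> sets M"
  shows "measure (bind N f) G = (\<integral>x. measure (f x) G \<partial>N)"
proof -
  have bs: "bind N f \<in> space (prob_algebra M)"
    using prob_space_bind'[OF N f] sets_bind'[OF N f] by (simp add: space_prob_algebra)
  have "measure (bind N f) G = (\<integral>y. indicator G y \<partial>bind N f)"
    using bs G by (simp add: space_prob_algebra ind_measure)
  also have "\<dots> = (\<integral>x. (\<integral>y. indicator G y \<partial>f x) \<partial>N)"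
    by (rule integral_bind_nn[OF N f, where B=1]) (use G in auto)
  also have "\<dots> = (\<integral>x. measure (f x) G \<partial>N)"
  proof (rule Bochner_Integration.integral_cong[OF refl])
    fix x assume "x \<in> space N"
    moreover have "space N = space M" using N sets_eq_imp_space_eq by (auto simp: space_prob_algebra)
    ultimately have "x \<in> space M" by simp
    then have "f x \<in> space (prob_algebra M)" using measurable_space[OF f] by blast
    then show "(\<integral>y. indicator G y \<partial>f x) = measure (f x) G"
      using G by (simp add: space_prob_algebra ind_measure)
  qed
  finally show ?thesis .
qed

lemma bind_mu_K: "bind mu K = mu"
proof (rule measure_eqI)
  show "sets (bind mu K) = sets mu" using sets_bind'[OF mu_space Kmeas] mu by simp
  fix A assume "A \<in> sets (bind mu K)"
  then have A: "A \<in> sets M" using sets_bind'[OF mu_space Kmeas] by simp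
  interpret b: prob_space "bind mu K" by (rule prob_space_bind'[OF mu_space Kmeas])
  interpret mu: prob_space mu by (rule mu(1))
  have "emeasure (bind mu K) A = ennreal (measure (bind mu K) A)"
    by (simp add: b.emeasure_eq_measure)
  also have "measure (bind mu K) A = measure mu A"
    using measure_bind_nn[OF mu_space Kmeas A] mu_inv[OF A] by simp
  also have "ennreal \<dots> = emeasure mu A" by (simp add: mu.emeasure_eq_measure)
  finally show "emeasure (bind mu K) A = emeasure mu A" .
qed

lemma bind_mu_kstep: "bind mu (kstep M K s) = mu"
proof (induction s)
  case 0
  have "kstep M K 0 = return M" by (simp add: fun_eq_iff)
  then show ?case using bind_return''[of mu M] mu by simp
next
  case (Suc s)
  have "kstep M K (Suc s) = (\<lambda>y. bind (kstep M K s y) K)" by (simp add: fun_eq_iff)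
  then have "bind mu (kstep M K (Suc s)) = bind mu (\<lambda>y. bind (kstep M K s y) K)" by simp
  also have "\<dots> = bind (bind mu (kstep M K s)) K"
  proof (rule bind_assoc[symmetric, OF _ K_sub])
    show "kstep M K s \<in> mu \<rightarrow>\<^sub>M subprob_algebra M"
      using kstep_sub measurable_cong_sets[OF mu(2) refl] by blast
  qed
  also have "\<dots> = mu" using Suc bind_mu_K by simp
  finally show ?case .
qed

lemma measure_kstep_meas: "G \<in> sets M \<Longrightarrow> (\<lambda>y. measure (kstep M K t y) G) \<in> borel_measurable M"
  using measurable_compose[OF kstep_meas measurable_measure_prob_algebra] by blast

lemma measure_K_meas: "G \<in> sets M \<Longrightarrow> (\<lambda>y. measure (K y) G) \<in> borel_measurable M"
  using measurable_compose[OF Kmeas measurable_measure_prob_algebra] by blast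

lemma mu_as_int: "G \<in> sets M \<Longrightarrow> measure mu G = (\<integral>y. measure (kstep M K t y) G \<partial>mu)"
  using measure_bind_nn[OF mu_space kstep_meas, of G t] bind_mu_kstep by simp

lemma m_le_mu: assumes G: "G \<in> sets M" shows "measure m G \<le> C * measure mu G"
proof -
  have "measure m G / C \<le> (\<integral>y. measure (kstep M K n0 y) G \<partial>mu)"
  proof (rule prob_integral_bounds[OF mu(1), THEN conjunct1])
    show "(\<lambda>y. measure (kstep M K n0 y) G) \<in> borel_measurable mu"
      using measure_kstep_meas[OF G] measurable_cong_sets[OF mu(2) refl] by blast
    fix y assume "y \<in> space mu"
    then have y: "y \<in> space M" using spmu by simp
    show "measure m G / C \<le> measure (kstep M K n0 y) G \<and> measure (kstep M K n0 y) G \<le> 1"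
      using lower[OF y G] prob_space.prob_le_1[OF kstep_prob[OF y]] by simp
  qed
  then have "measure m G / C \<le> measure mu G" using mu_as_int[OF G] by simp
  then show ?thesis using C by (simp add: field_simps)
qed

lemma kstep_Suc_Tk: assumes G: "G \<in> sets M" and x: "x \<in> space M"
  shows "measure (kstep M K (Suc a) x) G = Tk a (\<lambda>y. measure (K y) G) x"
  unfolding Tk_def using measure_bind_nn[OF kstep_space[OF x] Kmeas G] by simp

lemma mixing:
  assumes G: "G \<in> sets M" and x: "x \<in> space M" and s: "s \<ge> 1"
  shows "\<bar>measure (kstep M K s x) G - measure mu G\<bar> \<le> C^2 * (1 - 1/C)^((s - 1) div n0) * measure mu G"
    and "measure (kstep M K s x) G \<le> C^2 * measure mu G"
proof -
  define f where "f y = measure (K y) G" for y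
  define a where "a = s - 1"
  have sa: "s = Suc a" using s a_def by simp
  have fm: "f \<in> borel_measurable M" unfolding f_def by (rule measure_K_meas[OF G])
  have fb: "\<And>y. y \<in> space M \<Longrightarrow> 0 \<le> f y \<and> f y \<le> C * measure m G"
    unfolding f_def using upper G by auto
  have ad: "a = (a div n0) * n0 + a mod n0" by simp
  obtain \<alpha> \<beta> where ab: "0 \<le> \<alpha>" "\<beta> \<le> C * measure m G" "\<beta> - \<alpha> \<le> (1 - 1/C)^(a div n0) * (C * measure m G - 0)"
    and r: "\<forall>y\<in>space M. \<alpha> \<le> Tk ((a div n0) * n0 + a mod n0) f y \<and> Tk ((a div n0) * n0 + a mod n0) f y \<le> \<beta>"
    using iterate[OF fm fb, of "a div n0" "a mod n0"] by auto
  have r': "\<forall>y\<in>space M. \<alpha> \<le> measure (kstep M K s y) G \<and> measure (kstep M K s y) G \<le> \<beta>"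
    using r kstep_Suc_Tk[OF G] unfolding sa f_def[abs_def] by (metis ad)
  have p: "\<alpha> \<le> measure mu G \<and> measure mu G \<le> \<beta>"
    unfolding mu_as_int[OF G, of s]
    by (rule prob_integral_bounds[OF mu(1)])
       (use measure_kstep_meas[OF G] measurable_cong_sets[OF mu(2) refl] r' spmu in auto)
  have mm: "C * measure m G \<le> C^2 * measure mu G"
    using m_le_mu[OF G] C by (simp add: power2_eq_square)
  have rr: "0 \<le> (1 - 1/C)^(a div n0)" using C_ge1 by (simp add: field_simps)
  have "\<bar>measure (kstep M K s x) G - measure mu G\<bar> \<le> \<beta> - \<alpha>" using r' x p by auto
  also have "\<dots> \<le> (1 - 1/C)^(a div n0) * (C * measure m G)" using ab by simp
  also have "\<dots> \<le> (1 - 1/C)^(a div n0) * (C^2 * measure mu G)" by (rule mult_left_mono[OF mm rr])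
  finally show "\<bar>measure (kstep M K s x) G - measure mu G\<bar> \<le> C^2 * (1 - 1/C)^((s - 1) div n0) * measure mu G"
    unfolding a_def by (simp add: mult_ac)
  show "measure (kstep M K s x) G \<le> C^2 * measure mu G" using r' x ab(2) mm by fastforce
qed

end

lemma (in kern) measure_K_meas': "B \<in> sets M \<Longrightarrow> (\<lambda>y. measure (K y) B) \<in> borel_measurable M"
  using measurable_compose[OF Kmeas measurable_measure_prob_algebra] by blast

locale mc = kern +
  fixes P :: "'w measure" and X :: "nat \<Rightarrow> 'w \<Rightarrow> 'a" and nu :: "'a measure"
  assumes chain: "markov_chain P M K nu X"
begin

lemma P_prob: "prob_space P" using chain unfolding markov_chain_def by blast
lemma X_meas: "X i \<in> P \<rightarrow>\<^sub>M M" using chain unfolding markov_chain_def by blast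
lemma X_space: "\<omega> \<in> space P \<Longrightarrow> X i \<omega> \<in> space M" using measurable_space[OF X_meas] by blast
lemma chain_eq: "(\<And>i. A i \<in> sets M) \<Longrightarrow>
        measure P {\<omega> \<in> space P. \<forall>i\<le>Suc n. X i \<omega> \<in> A i} =
        (\<integral>\<omega>. indicator {\<omega>. \<forall>i\<le>n. X i \<omega> \<in> A i} \<omega> * measure (K (X n \<omega>)) (A (Suc n)) \<partial>P)"
  using chain unfolding markov_chain_def by blast

definition cyl :: "(nat \<Rightarrow> 'a set) \<Rightarrow> nat \<Rightarrow> 'w set" where
  "cyl A n = {\<omega> \<in> space P. \<forall>i\<le>n. X i \<omega> \<in> A i}"

lemma cyl_sets: "(\<And>i. A i \<in> sets M) \<Longrightarrow> cyl A n \<in> sets P"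
proof -
  assume A: "\<And>i. A i \<in> sets M"
  have "cyl A n = (\<Inter>i\<in>{..n}. X i -` A i \<inter> space P) \<inter> space P"
    unfolding cyl_def by auto
  also have "\<dots> \<in> sets P"
  proof -
    have "\<And>i. X i -` A i \<inter> space P \<in> sets P" using measurable_sets[OF X_meas A] .
    then show ?thesis by (rule_tac sets.Int, rule_tac sets.finite_INT) auto
  qed
  finally show ?thesis .
qed

lemma pre_sets: "B \<in> sets M \<Longrightarrow> {\<omega> \<in> space P. X i \<omega> \<in> B} \<in> sets P"
proof -
  assume "B \<in> sets M"
  then have "X i -` B \<inter> space P \<in> sets P" using measurable_sets[OF X_meas] by blast
  moreover have "X i -` B \<inter> space P = {\<omega> \<in> space P. X i \<omega> \<in> B}" by auto
  ultimately show ?thesis by simp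
qed

lemma one_step_sets:
  assumes A: "\<And>i. A i \<in> sets M" and B: "B \<in> sets M"
  shows "emeasure P (cyl A n \<inter> {\<omega>. X (Suc n) \<omega> \<in> B}) =
    (\<integral>\<^sup>+\<omega>. indicator (cyl A n) \<omega> * emeasure (K (X n \<omega>)) B \<partial>P)"
proof -
  interpret P: prob_space P by (rule P_prob)
  define A' where "A' = A(Suc n := B)"
  have A': "\<And>i. A' i \<in> sets M" unfolding A'_def using A B by auto
  have set1: "{\<omega> \<in> space P. \<forall>i\<le>Suc n. X i \<omega> \<in> A' i} = cyl A n \<inter> {\<omega>. X (Suc n) \<omega> \<in> B}"
    unfolding A'_def cyl_def by (auto simp: le_Suc_eq)
  have KX: "\<omega> \<in> space P \<Longrightarrow> prob_space (K (X n \<omega>))" for \<omega> using K_prob X_space by blast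
  define F where "F \<omega> = indicator (cyl A n) \<omega> * measure (K (X n \<omega>)) B" for \<omega>
  have Fm: "F \<in> borel_measurable P"
    unfolding F_def
    using cyl_sets[OF A] measurable_compose[OF X_meas measure_K_meas'[OF B]]
    by (intro borel_measurable_times borel_measurable_indicator) auto
  have Fb: "\<omega> \<in> space P \<Longrightarrow> 0 \<le> F \<omega> \<and> F \<omega> \<le> 1" for \<omega>
    unfolding F_def using prob_space.prob_le_1[OF KX] by (auto simp: indicator_def)
  have iF: "integrable P F"
    by (rule P.integrable_const_bound[where B=1]) (use Fb Fm in \<open>auto intro!: AE_I2\<close>)
  have "measure P {\<omega> \<in> space P. \<forall>i\<le>Suc n. X i \<omega> \<in> A' i}
      = (\<integral>\<omega>. indicator {\<omega>. \<forall>i\<le>n. X i \<omega> \<in> A' i} \<omega> * measure (K (X n \<omega>)) (A' (Suc n)) \<partial>P)"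
    by (rule chain_eq[OF A'])
  also have "\<dots> = (\<integral>\<omega>. F \<omega> \<partial>P)"
    by (rule Bochner_Integration.integral_cong[OF refl]) (auto simp: F_def A'_def cyl_def indicator_def)
  finally have eq: "measure P (cyl A n \<inter> {\<omega>. X (Suc n) \<omega> \<in> B}) = (\<integral>\<omega>. F \<omega> \<partial>P)"
    unfolding set1 .
  have "emeasure P (cyl A n \<inter> {\<omega>. X (Suc n) \<omega> \<in> B}) = ennreal (\<integral>\<omega>. F \<omega> \<partial>P)"
    unfolding eq[symmetric] by (simp add: P.emeasure_eq_measure)
  also have "\<dots> = (\<integral>\<^sup>+\<omega>. ennreal (F \<omega>) \<partial>P)"
    by (rule nn_integral_eq_integral[symmetric, OF iF]) (use Fb in \<open>auto intro!: AE_I2\<close>)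
  also have "\<dots> = (\<integral>\<^sup>+\<omega>. indicator (cyl A n) \<omega> * emeasure (K (X n \<omega>)) B \<partial>P)"
  proof (rule nn_integral_cong)
    fix \<omega> assume w: "\<omega> \<in> space P"
    show "ennreal (F \<omega>) = indicator (cyl A n) \<omega> * emeasure (K (X n \<omega>)) B"
    proof -
      interpret KX: prob_space "K (X n \<omega>)" by (rule KX[OF w])
      show ?thesis unfolding F_def by (auto simp: indicator_def KX.emeasure_eq_measure)
    qed
  qed
  finally show ?thesis .
qed

lemma spM_ne': "space M \<noteq> {}"
  using prob_space.not_empty[OF P_prob] X_space by blast

lemma one_step_fun:
  assumes A: "\<And>i. A i \<in> sets M" and g: "g \<in> borel_measurable M"
  shows "(\<integral>\<^sup>+\<omega>. indicator (cyl A n) \<omega> * g (X (Suc n) \<omega>) \<partial>P) =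
         (\<integral>\<^sup>+\<omega>. indicator (cyl A n) \<omega> * (\<integral>\<^sup>+y. g y \<partial>K (X n \<omega>)) \<partial>P)"
proof -
  define Q where "Q = density P (indicator (cyl A n))"
  have im: "indicator (cyl A n) \<in> borel_measurable P"
    using cyl_sets[OF A] by (rule borel_measurable_indicator)
  have XQ: "X i \<in> Q \<rightarrow>\<^sub>M M" for i unfolding Q_def using X_meas by simp
  have sd: "sets (distr Q M (X n)) = sets M" by simp
  have spd: "space (distr Q M (X n)) \<noteq> {}" using spM_ne' by simp
  have Kd: "K \<in> distr Q M (X n) \<rightarrow>\<^sub>M subprob_algebra M"
    using K_sub measurable_cong_sets[OF sd refl] by blast
  have eqm: "distr Q M (X (Suc n)) = bind (distr Q M (X n)) K"
  proof (rule measure_eqI)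
    show "sets (distr Q M (X (Suc n))) = sets (distr Q M (X n) \<bind> K)"
      using sets_bind_measurable[OF Kd spd] by simp
    fix B assume "B \<in> sets (distr Q M (X (Suc n)))"
    then have B: "B \<in> sets M" by simp
    have "emeasure (distr Q M (X (Suc n))) B = emeasure Q (X (Suc n) -` B \<inter> space Q)"
      by (rule emeasure_distr[OF XQ B])
    also have "\<dots> = emeasure Q (X (Suc n) -` B \<inter> space P)" by (simp add: Q_def)
    also have "\<dots> = (\<integral>\<^sup>+\<omega>. indicator (cyl A n) \<omega> * indicator (X (Suc n) -` B \<inter> space P) \<omega> \<partial>P)"
      unfolding Q_def by (rule emeasure_density[OF im measurable_sets[OF X_meas B]])
    also have "\<dots> = (\<integral>\<^sup>+\<omega>. indicator (cyl A n \<inter> {\<omega>. X (Suc n) \<omega> \<in> B}) \<omega> \<partial>P)"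
      by (rule nn_integral_cong) (auto simp: indicator_def cyl_def)
    also have "\<dots> = emeasure P (cyl A n \<inter> {\<omega>. X (Suc n) \<omega> \<in> B})"
    proof (rule nn_integral_indicator)
      have "cyl A n \<inter> {\<omega>. X (Suc n) \<omega> \<in> B} = cyl A n \<inter> {\<omega> \<in> space P. X (Suc n) \<omega> \<in> B}"
        by (auto simp: cyl_def)
      then show "cyl A n \<inter> {\<omega>. X (Suc n) \<omega> \<in> B} \<in> sets P"
        using cyl_sets[OF A] pre_sets[OF B] by auto
    qed
    also have "\<dots> = (\<integral>\<^sup>+\<omega>. indicator (cyl A n) \<omega> * emeasure (K (X n \<omega>)) B \<partial>P)"
      by (rule one_step_sets[OF A B])
    also have "\<dots> = (\<integral>\<^sup>+\<omega>. emeasure (K (X n \<omega>)) B \<partial>Q)"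
      unfolding Q_def
      by (rule nn_integral_density[symmetric, OF im])
         (rule measurable_compose[OF X_meas measurable_compose[OF K_sub measurable_emeasure_subprob_algebra[OF B]]])
    also have "\<dots> = (\<integral>\<^sup>+y. emeasure (K y) B \<partial>distr Q M (X n))"
      by (rule nn_integral_distr[symmetric, OF XQ])
         (use measurable_compose[OF K_sub measurable_emeasure_subprob_algebra[OF B]] in simp)
    also have "\<dots> = emeasure (bind (distr Q M (X n)) K) B"
      by (rule emeasure_bind[symmetric, OF spd Kd B])
    finally show "emeasure (distr Q M (X (Suc n))) B = emeasure (bind (distr Q M (X n)) K) B" .
  qed
  have hK: "(\<lambda>y. \<integral>\<^sup>+z. g z \<partial>K y) \<in> borel_measurable M"
    using measurable_compose[OF K_sub nn_integral_measurable_subprob_algebra[OF g]] by simp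
  have "(\<integral>\<^sup>+\<omega>. indicator (cyl A n) \<omega> * g (X (Suc n) \<omega>) \<partial>P) = (\<integral>\<^sup>+\<omega>. g (X (Suc n) \<omega>) \<partial>Q)"
    unfolding Q_def by (rule nn_integral_density[symmetric, OF im]) (use g X_meas in measurable)
  also have "\<dots> = (\<integral>\<^sup>+y. g y \<partial>distr Q M (X (Suc n)))"
    by (rule nn_integral_distr[symmetric, OF XQ]) (use g in simp)
  also have "\<dots> = (\<integral>\<^sup>+y. g y \<partial>bind (distr Q M (X n)) K)" unfolding eqm ..
  also have "\<dots> = (\<integral>\<^sup>+y. (\<integral>\<^sup>+z. g z \<partial>K y) \<partial>distr Q M (X n))"
    by (rule nn_integral_bind[OF g Kd])
  also have "\<dots> = (\<integral>\<^sup>+\<omega>. (\<integral>\<^sup>+z. g z \<partial>K (X n \<omega>)) \<partial>Q)"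
    by (rule nn_integral_distr[OF XQ]) (use hK in simp)
  also have "\<dots> = (\<integral>\<^sup>+\<omega>. indicator (cyl A n) \<omega> * (\<integral>\<^sup>+y. g y \<partial>K (X n \<omega>)) \<partial>P)"
    unfolding Q_def by (rule nn_integral_density[OF im]) (use hK X_meas in measurable)
  finally show ?thesis .
qed

lemma multi_step:
  assumes A: "\<And>i. A i \<in> sets M" and g: "g \<in> borel_measurable M"
  shows "(\<integral>\<^sup>+\<omega>. indicator (cyl A n) \<omega> * g (X (n + s) \<omega>) \<partial>P) =
         (\<integral>\<^sup>+\<omega>. indicator (cyl A n) \<omega> * (\<integral>\<^sup>+y. g y \<partial>kstep M K s (X n \<omega>)) \<partial>P)"
  using g
proof (induction s arbitrary: g)
  case 0
  show ?case
  proof (rule nn_integral_cong)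
    fix \<omega> assume w: "\<omega> \<in> space P"
    have "(\<integral>\<^sup>+y. g y \<partial>kstep M K 0 (X n \<omega>)) = g (X n \<omega>)"
      using nn_integral_return[OF X_space[OF w] 0] by simp
    then show "indicator (cyl A n) \<omega> * g (X (n + 0) \<omega>) =
      indicator (cyl A n) \<omega> * (\<integral>\<^sup>+y. g y \<partial>kstep M K 0 (X n \<omega>))" by simp
  qed
next
  case (Suc s)
  define A' where "A' i = (if i \<le> n then A i else space M)" for i
  have A': "\<And>i. A' i \<in> sets M" unfolding A'_def using A by auto
  have cc: "cyl A' (n + s) = cyl A n" unfolding cyl_def A'_def using X_space by auto
  define h where "h y = (\<integral>\<^sup>+z. g z \<partial>K y)" for y
  have hK: "h \<in> borel_measurable M" unfolding h_def
    using measurable_compose[OF K_sub nn_integral_measurable_subprob_algebra[OF Suc.prems]] by simp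
  have "(\<integral>\<^sup>+\<omega>. indicator (cyl A n) \<omega> * g (X (n + Suc s) \<omega>) \<partial>P)
      = (\<integral>\<^sup>+\<omega>. indicator (cyl A' (n + s)) \<omega> * g (X (Suc (n + s)) \<omega>) \<partial>P)"
    unfolding cc by simp
  also have "\<dots> = (\<integral>\<^sup>+\<omega>. indicator (cyl A' (n + s)) \<omega> * h (X (n + s) \<omega>) \<partial>P)"
    unfolding h_def by (rule one_step_fun[OF A' Suc.prems])
  also have "\<dots> = (\<integral>\<^sup>+\<omega>. indicator (cyl A n) \<omega> * (\<integral>\<^sup>+y. h y \<partial>kstep M K s (X n \<omega>)) \<partial>P)"
    unfolding cc by (rule Suc.IH[OF hK])
  also have "\<dots> = (\<integral>\<^sup>+\<omega>. indicator (cyl A n) \<omega> * (\<integral>\<^sup>+y. g y \<partial>kstep M K (Suc s) (X n \<omega>)) \<partial>P)"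
  proof (rule nn_integral_cong)
    fix \<omega> assume w: "\<omega> \<in> space P"
    have "(\<integral>\<^sup>+y. g y \<partial>kstep M K (Suc s) (X n \<omega>)) = (\<integral>\<^sup>+y. g y \<partial>bind (kstep M K s (X n \<omega>)) K)"
      by simp
    also have "\<dots> = (\<integral>\<^sup>+y. h y \<partial>kstep M K s (X n \<omega>))"
      unfolding h_def
    proof (rule nn_integral_bind[OF Suc.prems])
      show "K \<in> kstep M K s (X n \<omega>) \<rightarrow>\<^sub>M subprob_algebra M"
        using K_sub measurable_cong_sets[OF kstep_sets[OF X_space[OF w]] refl] by blast
    qed
    finally show "indicator (cyl A n) \<omega> * (\<integral>\<^sup>+y. h y \<partial>kstep M K s (X n \<omega>)) =
       indicator (cyl A n) \<omega> * (\<integral>\<^sup>+y. g y \<partial>kstep M K (Suc s) (X n \<omega>))" by simp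
  qed
  finally show ?case .
qed

definition EV :: "'a set \<Rightarrow> nat set \<Rightarrow> 'w set" where
  "EV G U = {\<omega> \<in> space P. \<forall>t\<in>U. X t \<omega> \<in> G}"

lemma EV_sets: "G \<in> sets M \<Longrightarrow> finite U \<Longrightarrow> EV G U \<in> sets P"
proof -
  assume G: "G \<in> sets M" and U: "finite U"
  have "EV G U = cyl (\<lambda>i. if i \<in> U then G else space M) (Max (insert 0 U))"
    unfolding EV_def cyl_def using X_space U by auto
  then show ?thesis using cyl_sets[of "\<lambda>i. if i \<in> U then G else space M"] G by auto
qed

lemma EV_step:
  assumes G: "G \<in> sets M" and A: "finite A" and lt: "\<forall>a\<in>A. a < b"
    and lo: "0 \<le> lo" and D: "D \<le> b - (if A = {} then 0 else Max A)" and D1: "1 \<le> D"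
    and bnd: "\<And>s x. s \<ge> D \<Longrightarrow> x \<in> space M \<Longrightarrow> lo \<le> measure (kstep M K s x) G \<and> measure (kstep M K s x) G \<le> hi"
  shows "lo * measure P (EV G A) \<le> measure P (EV G (insert b A)) \<and>
         measure P (EV G (insert b A)) \<le> hi * measure P (EV G A)"
proof -
  interpret P: prob_space P by (rule P_prob)
  define n where "n = (if A = {} then 0 else Max A)"
  define A' where "A' i = (if i \<in> A then G else space M)" for i
  have A': "\<And>i. A' i \<in> sets M" unfolding A'_def using G by auto
  have nb: "n < b" unfolding n_def using lt A D D1 by (cases "A = {}") auto
  have le_n: "a \<in> A \<Longrightarrow> a \<le> n" for a unfolding n_def using A by auto
  define s where "s = b - n"
  have bs: "b = n + s" unfolding s_def using nb by simp
  have sD: "s \<ge> D" unfolding s_def using D n_def by simp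
  have cyl_eq: "cyl A' n = EV G A" unfolding cyl_def EV_def A'_def using X_space le_n by auto
  have ev1: "EV G (insert b A) = cyl A' n \<inter> {\<omega>. X b \<omega> \<in> G}" unfolding cyl_eq EV_def by auto
  have hi0: "0 \<le> hi"
  proof -
    obtain x where "x \<in> space M" using spM_ne' by blast
    then show ?thesis using bnd[of D x] lo by auto
  qed
  have kb: "x \<in> space M \<Longrightarrow> ennreal lo \<le> emeasure (kstep M K s x) G \<and> emeasure (kstep M K s x) G \<le> ennreal hi" for x
  proof -
    assume x: "x \<in> space M"
    interpret Kx: prob_space "kstep M K s x" by (rule kstep_prob[OF x])
    show ?thesis using bnd[OF sD x] by (simp add: Kx.emeasure_eq_measure ennreal_leI)
  qed
  have "emeasure P (EV G (insert b A)) = (\<integral>\<^sup>+\<omega>. indicator (cyl A' n) \<omega> * indicator G (X (n + s) \<omega>) \<partial>P)"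
  proof -
    have "emeasure P (EV G (insert b A)) = (\<integral>\<^sup>+\<omega>. indicator (EV G (insert b A)) \<omega> \<partial>P)"
      using EV_sets[OF G] A by simp
    also have "\<dots> = (\<integral>\<^sup>+\<omega>. indicator (cyl A' n) \<omega> * indicator G (X (n + s) \<omega>) \<partial>P)"
      unfolding ev1 bs[symmetric] by (rule nn_integral_cong) (auto simp: indicator_def)
    finally show ?thesis .
  qed
  also have "\<dots> = (\<integral>\<^sup>+\<omega>. indicator (cyl A' n) \<omega> * (\<integral>\<^sup>+y. indicator G y \<partial>kstep M K s (X n \<omega>)) \<partial>P)"
    by (rule multi_step[OF A']) (use G in simp)
  also have "\<dots> = (\<integral>\<^sup>+\<omega>. indicator (cyl A' n) \<omega> * emeasure (kstep M K s (X n \<omega>)) G \<partial>P)"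
  proof (rule nn_integral_cong)
    fix \<omega> assume "\<omega> \<in> space P"
    then have "sets (kstep M K s (X n \<omega>)) = sets M" using kstep_sets X_space by blast
    then show "indicator (cyl A' n) \<omega> * (\<integral>\<^sup>+y. indicator G y \<partial>kstep M K s (X n \<omega>)) =
        indicator (cyl A' n) \<omega> * emeasure (kstep M K s (X n \<omega>)) G"
      using G by simp
  qed
  finally have eq: "emeasure P (EV G (insert b A)) = (\<integral>\<^sup>+\<omega>. indicator (cyl A' n) \<omega> * emeasure (kstep M K s (X n \<omega>)) G \<partial>P)" .
  have cs: "cyl A' n \<in> sets P" by (rule cyl_sets[OF A'])
  have up: "emeasure P (EV G (insert b A)) \<le> (\<integral>\<^sup>+\<omega>. ennreal hi * indicator (cyl A' n) \<omega> \<partial>P)"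
    unfolding eq by (rule nn_integral_mono) (use kb X_space in \<open>auto simp: indicator_def\<close>)
  have dn: "(\<integral>\<^sup>+\<omega>. ennreal lo * indicator (cyl A' n) \<omega> \<partial>P) \<le> emeasure P (EV G (insert b A))"
    unfolding eq by (rule nn_integral_mono) (use kb X_space in \<open>auto simp: indicator_def\<close>)
  have "ennreal (measure P (EV G (insert b A))) \<le> ennreal (hi * measure P (EV G A))"
    using up cs unfolding cyl_eq by (simp add: nn_integral_cmult_indicator P.emeasure_eq_measure ennreal_mult hi0)
  moreover have "ennreal (lo * measure P (EV G A)) \<le> ennreal (measure P (EV G (insert b A)))"
    using dn cs unfolding cyl_eq by (simp add: nn_integral_cmult_indicator P.emeasure_eq_measure ennreal_mult lo)
  ultimately show ?thesis using hi0 by (simp add: ennreal_le_iff)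
qed

lemma EV_bound:
  assumes G: "G \<in> sets M" and lo: "0 \<le> lo" and D1: "1 \<le> D"
    and bnd: "\<And>s x. s \<ge> D \<Longrightarrow> x \<in> space M \<Longrightarrow> lo \<le> measure (kstep M K s x) G \<and> measure (kstep M K s x) G \<le> hi"
    and U: "finite U" and U1: "\<forall>t\<in>U. D \<le> t" and U2: "\<forall>t\<in>U. \<forall>t'\<in>U. t < t' \<longrightarrow> D \<le> t' - t"
  shows "lo ^ card U \<le> measure P (EV G U) \<and> measure P (EV G U) \<le> hi ^ card U"
  using U U1 U2
proof (induction U rule: finite_linorder_max_induct)
  case empty
  have "EV G {} = space P" unfolding EV_def by auto
  then show ?case using prob_space.prob_space[OF P_prob] by simp
next
  case (insert b A)
  have hi0: "0 \<le> hi"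
  proof -
    obtain x where "x \<in> space M" using spM_ne' by blast
    then show ?thesis using bnd[of D x] lo by auto
  qed
  have IH: "lo ^ card A \<le> measure P (EV G A) \<and> measure P (EV G A) \<le> hi ^ card A"
    using insert by auto
  have bA: "b \<notin> A" using insert(2) by auto
  have D: "D \<le> b - (if A = {} then 0 else Max A)"
  proof (cases "A = {}")
    case True then show ?thesis using insert(4) by auto
  next
    case False
    then have "Max A \<in> A" "Max A < b" using insert(1,2) by auto
    then show ?thesis using insert(5) False by auto
  qed
  have st: "lo * measure P (EV G A) \<le> measure P (EV G (insert b A)) \<and>
         measure P (EV G (insert b A)) \<le> hi * measure P (EV G A)"
    by (rule EV_step[OF G insert(1,2) lo D D1 bnd])
  have c: "card (insert b A) = Suc (card A)" using insert(1) bA by simp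
  have "lo ^ Suc (card A) \<le> lo * measure P (EV G A)"
    using IH lo by (simp add: mult_left_mono)
  moreover have "hi * measure P (EV G A) \<le> hi ^ Suc (card A)"
    using IH hi0 by (simp add: mult_left_mono)
  ultimately show ?case using st c by auto
qed

end

locale qsys =
  fixes L :: nat and q :: "nat \<Rightarrow> nat \<Rightarrow> nat"
  assumes L1: "L \<ge> 1"
    and q_incr: "\<And>j l. 1 \<le> j \<Longrightarrow> j \<le> L \<Longrightarrow> 1 \<le> l \<Longrightarrow> q j l < q j (Suc l)"
    and q_first: "\<And>l. 1 \<le> l \<Longrightarrow> l \<le> q 1 l"
    and q_order: "\<And>j l. 1 \<le> j \<Longrightarrow> j < L \<Longrightarrow> 1 \<le> l \<Longrightarrow> q j l < q (Suc j) l"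
begin

lemma q_mono: assumes j: "1 \<le> j" "j \<le> L" and l: "1 \<le> l" and ll: "l < l'" shows "q j l < q j l'"
proof -
  have "q j l < q j (l + Suc d)" for d
  proof (induction d)
    case 0 then show ?case using q_incr[OF j l] by simp
  next
    case (Suc d)
    have "q j (l + Suc d) < q j (Suc (l + Suc d))" using q_incr[OF j, of "l + Suc d"] l by simp
    then show ?case using Suc by simp
  qed
  from this[of "l' - l - 1"] ll show ?thesis by simp
qed

lemma q_ord: assumes "1 \<le> j" "j < j'" "j' \<le> L" "1 \<le> l" shows "q j l < q j' l"
proof -
  have "j + Suc d \<le> L \<Longrightarrow> q j l < q (j + Suc d) l" for d
  proof (induction d)
    case 0 then show ?case using q_order[of j l] assms by simp
  next
    case (Suc d)
    then have "q (j + Suc d) l < q (Suc (j + Suc d)) l" using q_order[of "j + Suc d" l] assms by simp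
    then show ?case using Suc by simp
  qed
  from this[of "j' - j - 1"] assms show ?thesis by simp
qed

lemma q_le: assumes "1 \<le> j" "j \<le> j'" "j' \<le> L" "1 \<le> l" shows "q j l \<le> q j' l"
  using q_ord[of j j' l] assms by (cases "j = j'") auto

lemma q_ge: assumes "1 \<le> j" "j \<le> L" "1 \<le> l" shows "l \<le> q j l"
  using q_first[of l] q_le[of 1 j l] assms by simp

definition Ut :: "nat set \<Rightarrow> nat set" where
  "Ut T = (\<lambda>(j, l). q j l) ` ({1..L} \<times> T)"

definition close :: "nat \<Rightarrow> nat \<Rightarrow> nat \<Rightarrow> bool" where
  "close D l l' = (\<exists>i\<in>{1..L}. \<exists>i'\<in>{1..L}. q i l < q i' l' + D \<and> q i' l' < q i l + D)"

definition bad :: "nat \<Rightarrow> nat \<Rightarrow> nat set \<Rightarrow> bool" where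
  "bad l0 D T = ((\<exists>l\<in>T. l < l0) \<or> (\<exists>l\<in>T. \<exists>l'\<in>T. l \<noteq> l' \<and> close D l l'))"

definition Tset :: "nat \<Rightarrow> nat \<Rightarrow> nat set set" where
  "Tset n k = {T. T \<subseteq> {1..n} \<and> card T = k}"

lemma close_sym: "close D l l' = close D l' l"
  unfolding close_def by blast

lemma Ut_insert: "Ut (insert l T) = (\<lambda>j. q j l) ` {1..L} \<union> Ut T"
  unfolding Ut_def by auto

lemma Ut_single: "Ut {l} = (\<lambda>j. q j l) ` {1..L}"
  unfolding Ut_def by auto

lemma finite_Ut: "finite T \<Longrightarrow> finite (Ut T)"
  unfolding Ut_def by auto

lemma card_Ut_single: assumes "1 \<le> l" shows "card (Ut {l}) = L"
proof -
  have "inj_on (\<lambda>j. q j l) {1..L}"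
  proof (rule inj_onI)
    fix j j' assume "j \<in> {1..L}" "j' \<in> {1..L}" "q j l = q j' l"
    then show "j = j'" using q_ord[of j j' l] q_ord[of j' j l] assms by (cases j j' rule: linorder_cases) auto
  qed
  then show ?thesis unfolding Ut_single by (simp add: card_image)
qed

lemma card_Ut_le: "finite T \<Longrightarrow> card (Ut T) \<le> L * card T"
  unfolding Ut_def using card_image_le[of "{1..L} \<times> T" "\<lambda>(j, l). q j l"] by (simp add: card_cartesian_product)

lemma Ut_ge: "\<forall>x\<in>T. 1 \<le> x \<Longrightarrow> t \<in> Ut T \<Longrightarrow> 1 \<le> t"
  unfolding Ut_def using q_ge by force

lemma new_time: assumes T1: "\<forall>x\<in>T. 1 \<le> x" and lt: "\<forall>x\<in>T. x < l"
  shows "q L l \<notin> Ut T"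
proof
  assume "q L l \<in> Ut T"
  then obtain j x where jx: "j \<in> {1..L}" "x \<in> T" "q L l = q j x" unfolding Ut_def by auto
  have "q j x \<le> q L x" using q_le[of j L x] jx T1 by auto
  also have "\<dots> < q L l" using q_mono[of L x l] jx T1 lt L1 by auto
  finally show False using jx by simp
qed

lemma card_Ut_insert_ge: assumes T: "finite T" and T1: "\<forall>x\<in>T. 1 \<le> x" and lt: "\<forall>x\<in>T. x < l"
  shows "card (Ut (insert l T)) \<ge> Suc (card (Ut T))"
proof -
  have "q L l \<in> Ut (insert l T)" unfolding Ut_def
    by (rule image_eqI[of _ _ "(L, l)"]) (use L1 in auto)
  moreover have "Ut T \<subseteq> Ut (insert l T)" unfolding Ut_def by auto
  ultimately have sub: "insert (q L l) (Ut T) \<subseteq> Ut (insert l T)" by (rule insert_subsetI)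
  have fin: "finite (Ut (insert l T))" by (rule finite_Ut) (use T in simp)
  have "card (insert (q L l) (Ut T)) = Suc (card (Ut T))"
    using new_time[OF T1 lt] finite_Ut[OF T] by simp
  then show ?thesis using card_mono[OF fin sub] by simp
qed

lemma disjoint_not_close: assumes D: "1 \<le> D" and nc: "\<not> (\<exists>l'\<in>T. close D l l')"
  shows "Ut {l} \<inter> Ut T = {}"
proof (rule ccontr)
  assume "Ut {l} \<inter> Ut T \<noteq> {}"
  then obtain t where t1: "t \<in> Ut {l}" and t2: "t \<in> Ut T" by blast
  from t1 obtain i where i: "i \<in> {1..L}" "t = q i l" unfolding Ut_single by blast
  from t2 obtain p where p: "p \<in> {1..L} \<times> T" "t = (\<lambda>(j, l). q j l) p" unfolding Ut_def by (rule imageE)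
  obtain i' l' where p': "p = (i', l')" by (cases p)
  have i': "i' \<in> {1..L}" "l' \<in> T" "t = q i' l'" using p p' by auto
  have "q i l < q i' l' + D \<and> q i' l' < q i l + D" using D i(2) i'(3) by simp
  then have "close D l l'" unfolding close_def using i(1) i'(1) by blast
  then show False using nc i'(2) by blast
qed

lemma card_Ut_insert_disj: assumes T: "finite T" and D: "1 \<le> D" and nc: "\<not> (\<exists>l'\<in>T. close D l l')" and l: "1 \<le> l"
  shows "card (Ut (insert l T)) = L + card (Ut T)"
proof -
  have e: "Ut (insert l T) = Ut {l} \<union> Ut T" unfolding Ut_def by auto
  show ?thesis unfolding e
    using card_Un_disjoint[OF finite_Ut finite_Ut disjoint_not_close[OF D nc]] T card_Ut_single[OF l]
    by simp
qed

lemma close_count1: assumes i: "1 \<le> i" "i \<le> L"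
  shows "card {l\<in>{1..n}. q i l < x + D \<and> x < q i l + D} \<le> 2 * D"
proof -
  have inj: "inj_on (q i) {l\<in>{1..n}. q i l < x + D \<and> x < q i l + D}"
  proof (rule inj_onI)
    fix a b assume a: "a \<in> {l\<in>{1..n}. q i l < x + D \<and> x < q i l + D}" and b: "b \<in> {l\<in>{1..n}. q i l < x + D \<and> x < q i l + D}"
      and e: "q i a = q i b"
    show "a = b"
    proof (rule ccontr)
      assume "a \<noteq> b"
      then have "a < b \<or> b < a" by arith
      then show False using q_mono[OF i, of a b] q_mono[OF i, of b a] a b e by auto
    qed
  qed
  have sub: "q i ` {l\<in>{1..n}. q i l < x + D \<and> x < q i l + D} \<subseteq> {x - D..<x + D}" by auto
  have "card {l\<in>{1..n}. q i l < x + D \<and> x < q i l + D} \<le> card {x - D..<x + D}"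
    by (rule card_inj_on_le[OF inj sub]) simp
  also have "\<dots> \<le> 2 * D" by simp
  finally show ?thesis .
qed

lemma att_count: assumes T: "finite T"
  shows "card {l\<in>{1..n}. l < l0 \<or> (\<exists>l'\<in>T. close D l l')} \<le> l0 + card T * (L * L * (2 * D))"
proof -
  define Z where "Z l' i i' = {l\<in>{1..n}. q i l < q i' l' + D \<and> q i' l' < q i l + D}" for l' i i'
  have sub: "{l\<in>{1..n}. l < l0 \<or> (\<exists>l'\<in>T. close D l l')} \<subseteq>
      {..<l0} \<union> (\<Union>l'\<in>T. \<Union>i\<in>{1..L}. \<Union>i'\<in>{1..L}. Z l' i i')"
    unfolding Z_def close_def by blast
  have fZ: "finite (Z l' i i')" for l' i i' unfolding Z_def by simp
  have cZ: "i \<in> {1..L} \<Longrightarrow> card (Z l' i i') \<le> 2 * D" for l' i i'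
    unfolding Z_def using close_count1[of i n "q i' l'" D] by auto
  have "card (\<Union>l'\<in>T. \<Union>i\<in>{1..L}. \<Union>i'\<in>{1..L}. Z l' i i') \<le> (\<Sum>l'\<in>T. card (\<Union>i\<in>{1..L}. \<Union>i'\<in>{1..L}. Z l' i i'))"
    by (rule card_UN_le[OF T])
  also have "\<dots> \<le> (\<Sum>l'\<in>T. L * L * (2 * D))"
  proof (rule sum_mono)
    fix l' assume "l' \<in> T"
    have "card (\<Union>i\<in>{1..L}. \<Union>i'\<in>{1..L}. Z l' i i') \<le> (\<Sum>i\<in>{1..L}. card (\<Union>i'\<in>{1..L}. Z l' i i'))"
      by (rule card_UN_le) simp
    also have "\<dots> \<le> (\<Sum>i\<in>{1..L}. L * (2 * D))"
    proof (rule sum_mono)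
      fix i assume i: "i \<in> {1..L}"
      have "card (\<Union>i'\<in>{1..L}. Z l' i i') \<le> (\<Sum>i'\<in>{1..L}. card (Z l' i i'))"
        by (rule card_UN_le) simp
      also have "\<dots> \<le> (\<Sum>i'\<in>{1..L}. 2 * D)" by (rule sum_mono) (use cZ i in auto)
      finally show "card (\<Union>i'\<in>{1..L}. Z l' i i') \<le> L * (2 * D)" by simp
    qed
    finally show "card (\<Union>i\<in>{1..L}. \<Union>i'\<in>{1..L}. Z l' i i') \<le> L * L * (2 * D)" by simp
  qed
  finally have c2: "card (\<Union>l'\<in>T. \<Union>i\<in>{1..L}. \<Union>i'\<in>{1..L}. Z l' i i') \<le> card T * (L * L * (2 * D))" by simp
  have "card {l\<in>{1..n}. l < l0 \<or> (\<exists>l'\<in>T. close D l l')}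
      \<le> card ({..<l0} \<union> (\<Union>l'\<in>T. \<Union>i\<in>{1..L}. \<Union>i'\<in>{1..L}. Z l' i i'))"
    by (rule card_mono[OF _ sub]) (use T fZ in auto)
  also have "\<dots> \<le> card {..<l0} + card (\<Union>l'\<in>T. \<Union>i\<in>{1..L}. \<Union>i'\<in>{1..L}. Z l' i i')"
    by (rule card_Un_le)
  finally show ?thesis using c2 by simp
qed

lemma finite_Tset: "finite (Tset n k)"
proof -
  have "Tset n k \<subseteq> Pow {1..n}" unfolding Tset_def by auto
  then show ?thesis by (rule finite_subset) simp
qed

lemma sum_Tset_Suc:
  fixes f :: "nat set \<Rightarrow> real"
  assumes nn: "\<And>T. 0 \<le> f T"
  shows "(\<Sum>T\<in>Tset n (Suc k). f T) \<le> (\<Sum>T'\<in>Tset n k. \<Sum>l\<in>{l\<in>{1..n}. \<forall>x\<in>T'. x < l}. f (insert l T'))"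
proof -
  define Pi where "Pi = Sigma (Tset n k) (\<lambda>T'. {l\<in>{1..n}. \<forall>x\<in>T'. x < l})"
  define phi where "phi = (\<lambda>(T' :: nat set, l :: nat). insert l T')"
  have fPi: "finite Pi" unfolding Pi_def using finite_Tset by auto
  have sub: "Tset n (Suc k) \<subseteq> phi ` Pi"
  proof
    fix T assume T: "T \<in> Tset n (Suc k)"
    then have Tf: "finite T" "T \<noteq> {}" "T \<subseteq> {1..n}" "card T = Suc k"
      unfolding Tset_def using finite_subset[of T "{1..n}"] by auto
    define l where "l = Max T"
    have lT: "l \<in> T" unfolding l_def using Tf Max_in by blast
    have "T - {l} \<in> Tset n k" unfolding Tset_def using Tf lT by auto
    moreover have "l \<in> {l\<in>{1..n}. \<forall>x\<in>T - {l}. x < l}"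
    proof -
      have "l \<in> {1..n}" using lT Tf by blast
      moreover have "\<forall>x\<in>T - {l}. x < l"
        using Max_ge[OF Tf(1)] unfolding l_def by (auto intro: le_neq_implies_less)
      ultimately show ?thesis by blast
    qed
    ultimately have "(T - {l}, l) \<in> Pi" unfolding Pi_def by auto
    moreover have "T = phi (T - {l}, l)" unfolding phi_def using lT by auto
    ultimately show "T \<in> phi ` Pi" by blast
  qed
  have "(\<Sum>T\<in>Tset n (Suc k). f T) \<le> (\<Sum>T\<in>phi ` Pi. f T)"
    by (rule sum_mono2[OF _ sub]) (use fPi nn in auto)
  also have "\<dots> \<le> (\<Sum>p\<in>Pi. f (phi p))"
    using sum_image_le[OF fPi, of f phi] nn by (simp add: comp_def)
  also have "\<dots> = (\<Sum>T'\<in>Tset n k. \<Sum>l\<in>{l\<in>{1..n}. \<forall>x\<in>T'. x < l}. f (insert l T'))"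
    unfolding Pi_def phi_def by (subst sum.Sigma) (use finite_Tset in \<open>auto intro!: sum.cong split: prod.splits\<close>)
  finally show ?thesis .
qed

lemma Tset_props: "T \<in> Tset n k \<Longrightarrow> finite T \<and> (\<forall>x\<in>T. 1 \<le> x \<and> x \<le> n) \<and> card T = k"
  unfolding Tset_def using finite_subset[of T "{1..n}"] by auto

lemma bad_insert: assumes "l \<notin> T" "bad l0 D (insert l T)"
  shows "bad l0 D T \<or> l < l0 \<or> (\<exists>l'\<in>T. close D l l')"
  using assms unfolding bad_def using close_sym by blast

lemma inner_G:
  fixes w :: real
  assumes T': "T' \<in> Tset n k" and w: "0 \<le> w" "w \<le> 1" and D: "1 \<le> D"
  shows "(\<Sum>l\<in>{l\<in>{1..n}. \<forall>x\<in>T'. x < l}. w ^ card (Ut (insert l T')))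
     \<le> w ^ card (Ut T') * (real n * w ^ L + real (l0 + k * (L * L * (2 * D))) * w)"
proof -
  define S where "S = {l\<in>{1..n}. \<forall>x\<in>T'. x < l}"
  define Att where "Att = {l\<in>{1..n}. l < l0 \<or> (\<exists>l'\<in>T'. close D l l')}"
  define c where "c = card (Ut T')"
  have Tp: "finite T'" "\<forall>x\<in>T'. 1 \<le> x \<and> x \<le> n" "card T' = k" using Tset_props[OF T'] by auto
  have fS: "finite S" unfolding S_def by simp
  have tm: "w ^ card (Ut (insert l T')) \<le> w ^ c * w ^ L + (if l \<in> Att then w ^ c * w else 0)" if l: "l \<in> S" for l
  proof (cases "l \<in> Att")
    case True
    have "Suc c \<le> card (Ut (insert l T'))"
      unfolding c_def by (rule card_Ut_insert_ge) (use Tp l S_def in auto)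
    then have a: "w ^ card (Ut (insert l T')) \<le> w * w ^ c" by (rule power_decreasing[OF _ w, THEN order_trans]) simp
    have b: "0 \<le> w ^ c * w ^ L" using w by simp
    show ?thesis using True a b by (simp add: mult_ac)
  next
    case False
    then have nc: "\<not> (\<exists>l'\<in>T'. close D l l')" and l1: "1 \<le> l" using l unfolding Att_def S_def by auto
    have "card (Ut (insert l T')) = L + c" unfolding c_def by (rule card_Ut_insert_disj[OF Tp(1) D nc l1])
    then show ?thesis using False by (simp add: power_add mult_ac)
  qed
  have "(\<Sum>l\<in>S. w ^ card (Ut (insert l T'))) \<le> (\<Sum>l\<in>S. w ^ c * w ^ L + (if l \<in> Att then w ^ c * w else 0))"
    by (rule sum_mono) (rule tm)
  also have "\<dots> = real (card S) * (w ^ c * w ^ L) + real (card (S \<inter> Att)) * (w ^ c * w)"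
    by (simp add: sum.distrib sum.inter_restrict[OF fS, symmetric])
  also have "\<dots> \<le> real n * (w ^ c * w ^ L) + real (l0 + k * (L * L * (2 * D))) * (w ^ c * w)"
  proof (rule add_mono; rule mult_right_mono)
    have "card S \<le> card {1..n}" unfolding S_def by (rule card_mono) auto
    then show "real (card S) \<le> real n" by simp
    have "card (S \<inter> Att) \<le> card Att" by (rule card_mono) (auto simp: Att_def)
    also have "\<dots> \<le> l0 + card T' * (L * L * (2 * D))" unfolding Att_def by (rule att_count[OF Tp(1)])
    finally have "card (S \<inter> Att) \<le> l0 + k * (L * L * (2 * D))" using Tp(3) by simp
    then show "real (card (S \<inter> Att)) \<le> real (l0 + k * (L * L * (2 * D)))" by (simp only: of_nat_le_iff)
  qed (use w in auto)
  finally show ?thesis unfolding S_def c_def by (simp add: algebra_simps)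
qed

lemma inner_B:
  fixes w :: real
  assumes T': "T' \<in> Tset n k" and w: "0 \<le> w" "w \<le> 1" and D: "1 \<le> D"
  shows "(\<Sum>l\<in>{l\<in>{1..n}. \<forall>x\<in>T'. x < l}. if bad l0 D (insert l T') then w ^ card (Ut (insert l T')) else 0)
     \<le> (if bad l0 D T' then w ^ card (Ut T') * (real n * w ^ L + real (l0 + k * (L * L * (2 * D))) * w) else 0)
        + real (l0 + k * (L * L * (2 * D))) * w * w ^ card (Ut T')"
proof -
  define S where "S = {l\<in>{1..n}. \<forall>x\<in>T'. x < l}"
  define Att where "Att = {l\<in>{1..n}. l < l0 \<or> (\<exists>l'\<in>T'. close D l l')}"
  define c where "c = card (Ut T')"
  define A where "A = l0 + k * (L * L * (2 * D))"
  have Tp: "finite T'" "\<forall>x\<in>T'. 1 \<le> x \<and> x \<le> n" "card T' = k" using Tset_props[OF T'] by auto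
  have fS: "finite S" unfolding S_def by simp
  have tm: "(if bad l0 D (insert l T') then w ^ card (Ut (insert l T')) else 0)
      \<le> (if bad l0 D T' then w ^ card (Ut (insert l T')) else 0) + (if l \<in> Att then w ^ c * w else 0)"
    if l: "l \<in> S" for l
  proof -
    have lT: "l \<notin> T'" using l unfolding S_def by auto
    have ge: "w ^ card (Ut (insert l T')) \<le> w ^ Suc c"
      by (rule power_decreasing[OF _ w]) (unfold c_def, rule card_Ut_insert_ge, use Tp l S_def in auto)
    have nn: "0 \<le> w ^ card (Ut (insert l T'))" using w by simp
    show ?thesis
    proof (cases "bad l0 D (insert l T')")
      case True
      then have "bad l0 D T' \<or> l \<in> Att" using bad_insert[OF lT] l unfolding Att_def S_def by auto
      then show ?thesis using True ge nn w by (auto simp: mult_ac)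
    next
      case False then show ?thesis using nn w by auto
    qed
  qed
  have "(\<Sum>l\<in>S. if bad l0 D (insert l T') then w ^ card (Ut (insert l T')) else 0)
     \<le> (\<Sum>l\<in>S. (if bad l0 D T' then w ^ card (Ut (insert l T')) else 0) + (if l \<in> Att then w ^ c * w else 0))"
    by (rule sum_mono) (rule tm)
  also have "\<dots> = (if bad l0 D T' then (\<Sum>l\<in>S. w ^ card (Ut (insert l T'))) else 0) + real (card (S \<inter> Att)) * (w ^ c * w)"
    by (simp add: sum.distrib sum.inter_restrict[OF fS, symmetric])
  also have "\<dots> \<le> (if bad l0 D T' then w ^ c * (real n * w ^ L + real A * w) else 0) + real A * (w ^ c * w)"
  proof (rule add_mono)
    show "(if bad l0 D T' then (\<Sum>l\<in>S. w ^ card (Ut (insert l T'))) else 0) \<le> (if bad l0 D T' then w ^ c * (real n * w ^ L + real A * w) else 0)"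
      using inner_G[OF T' w D, of l0] unfolding S_def c_def A_def by auto
    have "card (S \<inter> Att) \<le> card Att" by (rule card_mono) (auto simp: Att_def)
    also have "\<dots> \<le> l0 + card T' * (L * L * (2 * D))" unfolding Att_def by (rule att_count[OF Tp(1)])
    finally have "card (S \<inter> Att) \<le> A" using Tp(3) unfolding A_def by simp
    then have "real (card (S \<inter> Att)) \<le> real A" by simp
    then show "real (card (S \<inter> Att)) * (w ^ c * w) \<le> real A * (w ^ c * w)"
      by (rule mult_right_mono) (use w in simp)
  qed
  finally show ?thesis unfolding S_def c_def A_def by (simp add: mult_ac)
qed

definition Gsum :: "nat \<Rightarrow> nat \<Rightarrow> real \<Rightarrow> real" where
  "Gsum n k w = (\<Sum>T\<in>Tset n k. w ^ card (Ut T))"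

definition Bsum :: "nat \<Rightarrow> nat \<Rightarrow> nat \<Rightarrow> nat \<Rightarrow> real \<Rightarrow> real" where
  "Bsum l0 D n k w = (\<Sum>T\<in>Tset n k. if bad l0 D T then w ^ card (Ut T) else 0)"

lemma G_rec:
  assumes w: "0 \<le> w" "w \<le> 1" and D: "1 \<le> D"
  shows "Gsum n (Suc k) w \<le> Gsum n k w * (real n * w ^ L + real (l0 + k * (L * L * (2 * D))) * w)"
proof -
  have "Gsum n (Suc k) w \<le> (\<Sum>T'\<in>Tset n k. \<Sum>l\<in>{l\<in>{1..n}. \<forall>x\<in>T'. x < l}. w ^ card (Ut (insert l T')))"
    unfolding Gsum_def by (rule sum_Tset_Suc) (use w in simp)
  also have "\<dots> \<le> (\<Sum>T'\<in>Tset n k. w ^ card (Ut T') * (real n * w ^ L + real (l0 + k * (L * L * (2 * D))) * w))"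
    by (rule sum_mono) (rule inner_G[OF _ w D])
  also have "\<dots> = Gsum n k w * (real n * w ^ L + real (l0 + k * (L * L * (2 * D))) * w)"
    unfolding Gsum_def by (simp add: sum_distrib_right)
  finally show ?thesis .
qed

lemma B_rec:
  assumes w: "0 \<le> w" "w \<le> 1" and D: "1 \<le> D"
  shows "Bsum l0 D n (Suc k) w \<le> Bsum l0 D n k w * (real n * w ^ L + real (l0 + k * (L * L * (2 * D))) * w)
     + Gsum n k w * (real (l0 + k * (L * L * (2 * D))) * w)"
proof -
  have "Bsum l0 D n (Suc k) w \<le> (\<Sum>T'\<in>Tset n k. \<Sum>l\<in>{l\<in>{1..n}. \<forall>x\<in>T'. x < l}.
      if bad l0 D (insert l T') then w ^ card (Ut (insert l T')) else 0)"
    unfolding Bsum_def by (rule sum_Tset_Suc) (use w in simp)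
  also have "\<dots> \<le> (\<Sum>T'\<in>Tset n k. (if bad l0 D T' then w ^ card (Ut T') * (real n * w ^ L + real (l0 + k * (L * L * (2 * D))) * w) else 0)
        + real (l0 + k * (L * L * (2 * D))) * w * w ^ card (Ut T'))"
    by (rule sum_mono) (rule inner_B[OF _ w D])
  also have "\<dots> = (\<Sum>T'\<in>Tset n k. (if bad l0 D T' then w ^ card (Ut T') else 0) * (real n * w ^ L + real (l0 + k * (L * L * (2 * D))) * w)
        + w ^ card (Ut T') * (real (l0 + k * (L * L * (2 * D))) * w))"
    by (rule sum.cong) (auto simp: mult_ac)
  also have "\<dots> = Bsum l0 D n k w * (real n * w ^ L + real (l0 + k * (L * L * (2 * D))) * w)
     + Gsum n k w * (real (l0 + k * (L * L * (2 * D))) * w)"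
    unfolding Bsum_def Gsum_def sum.distrib sum_distrib_right ..
  finally show ?thesis .
qed

lemma good_sep:
  assumes T: "T \<in> Tset n k" and nb: "\<not> bad l0 D T" and Dl: "D \<le> l0" and D: "1 \<le> D"
    and gap: "\<And>l i. l0 \<le> l \<Longrightarrow> 1 \<le> i \<Longrightarrow> i < L \<Longrightarrow> D \<le> q (Suc i) l - q i l"
  shows "\<forall>t\<in>Ut T. D \<le> t" "\<forall>t\<in>Ut T. \<forall>t'\<in>Ut T. t < t' \<longrightarrow> D \<le> t' - t" "card (Ut T) = L * k"
proof -
  have Tp: "finite T" "\<forall>x\<in>T. 1 \<le> x \<and> x \<le> n" "card T = k" using Tset_props[OF T] by auto
  have lbig: "l \<in> T \<Longrightarrow> l0 \<le> l" for l using nb unfolding bad_def by auto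
  have nc: "l \<in> T \<Longrightarrow> l' \<in> T \<Longrightarrow> l \<noteq> l' \<Longrightarrow> \<not> close D l l'" for l l' using nb unfolding bad_def by auto
  have UtE: "t \<in> Ut T \<Longrightarrow> \<exists>j l. j \<in> {1..L} \<and> l \<in> T \<and> t = q j l" for t
    unfolding Ut_def by auto
  show "\<forall>t\<in>Ut T. D \<le> t"
  proof
    fix t assume "t \<in> Ut T"
    then obtain j l where jl: "j \<in> {1..L}" "l \<in> T" "t = q j l" using UtE by blast
    have "D \<le> l" using lbig[OF jl(2)] Dl by simp
    also have "l \<le> q j l" using q_ge[of j l] jl Tp by auto
    finally show "D \<le> t" using jl by simp
  qed
  have within: "D \<le> q j' l - q j l" if "j \<in> {1..L}" "j' \<in> {1..L}" "j < j'" "l \<in> T" for j j' l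
  proof -
    have l1: "1 \<le> l" using that Tp by auto
    have "D \<le> q (Suc j) l - q j l" using gap[OF lbig[OF that(4)], of j] that by auto
    moreover have "q (Suc j) l \<le> q j' l" using q_le[of "Suc j" j' l] that l1 by auto
    moreover have "q j l < q (Suc j) l" using q_order[of j l] that l1 by auto
    ultimately show ?thesis by linarith
  qed
  show "\<forall>t\<in>Ut T. \<forall>t'\<in>Ut T. t < t' \<longrightarrow> D \<le> t' - t"
  proof (intro ballI impI)
    fix t t' assume t: "t \<in> Ut T" and t': "t' \<in> Ut T" and lt: "t < t'"
    obtain j l where jl: "j \<in> {1..L}" "l \<in> T" "t = q j l" using UtE[OF t] by blast
    obtain j' l' where jl': "j' \<in> {1..L}" "l' \<in> T" "t' = q j' l'" using UtE[OF t'] by blast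
    show "D \<le> t' - t"
    proof (cases "l = l'")
      case True
      have l1: "1 \<le> l" using jl Tp by auto
      have "j < j'"
      proof (rule ccontr)
        assume "\<not> j < j'"
        then have "j' \<le> j" by simp
        then have "q j' l \<le> q j l" using q_le[of j' j l] jl jl' l1 by auto
        then show False using lt jl jl' True by simp
      qed
      then show ?thesis using within[OF jl(1) jl'(1) _ jl(2)] jl jl' True by simp
    next
      case False
      have "\<not> close D l l'" by (rule nc[OF jl(2) jl'(2) False])
      then have "\<not> (q j l < q j' l' + D \<and> q j' l' < q j l + D)" unfolding close_def using jl(1) jl'(1) by blast
      then show ?thesis using lt jl jl' by auto
    qed
  qed
  have inj: "inj_on (\<lambda>(j, l). q j l) ({1..L} \<times> T)"
  proof (rule inj_onI)
    fix p p' assume p: "p \<in> {1..L} \<times> T" and p': "p' \<in> {1..L} \<times> T" and e: "(\<lambda>(j, l). q j l) p = (\<lambda>(j, l). q j l) p'"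
    obtain j l where pj: "p = (j, l)" by (cases p)
    obtain j' l' where pj': "p' = (j', l')" by (cases p')
    have jl: "j \<in> {1..L}" "l \<in> T" "j' \<in> {1..L}" "l' \<in> T" "q j l = q j' l'" using p p' e pj pj' by auto
    have ll: "l = l'"
    proof (rule ccontr)
      assume "l \<noteq> l'"
      then have "\<not> close D l l'" using nc jl by blast
      then show False unfolding close_def using jl D by force
    qed
    have "j = j'"
    proof (rule ccontr)
      assume "j \<noteq> j'"
      then have "j < j' \<or> j' < j" by arith
      then show False using within[of j j' l] within[of j' j l] jl ll D by auto
    qed
    then show "p = p'" using pj pj' ll by simp
  qed
  show "card (Ut T) = L * k" unfolding Ut_def using card_image[OF inj] Tp by (simp add: card_cartesian_product)
qed

end

context qsys begin

lemma Tset_0: "Tset n 0 = {{}}"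
  unfolding Tset_def using finite_subset[of _ "{1..n}"] by auto

lemma Gsum_nn: "0 \<le> w \<Longrightarrow> 0 \<le> Gsum n k w"
  unfolding Gsum_def by (rule sum_nonneg) simp

lemma Bsum_nn: "0 \<le> w \<Longrightarrow> 0 \<le> Bsum l0 D n k w"
  unfolding Bsum_def by (rule sum_nonneg) simp

lemma GB_asym:
  fixes w :: "nat \<Rightarrow> real"
  assumes w0: "\<And>n. 0 \<le> w n" and wl: "w \<longlonglongrightarrow> 0"
    and bnd: "eventually (\<lambda>n. real n * w n ^ L \<le> Lam) sequentially" and D: "1 \<le> D"
  shows "(\<exists>Bd. eventually (\<lambda>n. Gsum n k (w n) \<le> Bd) sequentially) \<and> (\<lambda>n. Bsum l0 D n k (w n)) \<longlonglongrightarrow> 0"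
proof (induction k)
  case 0
  have "Gsum n 0 (w n) = 1" for n unfolding Gsum_def Tset_0 Ut_def by simp
  moreover have "Bsum l0 D n 0 (w n) = 0" for n unfolding Bsum_def Tset_0 bad_def by simp
  ultimately show ?case by auto
next
  case (Suc k)
  then obtain Bd where Bd: "eventually (\<lambda>n. Gsum n k (w n) \<le> Bd) sequentially" and Bk: "(\<lambda>n. Bsum l0 D n k (w n)) \<longlonglongrightarrow> 0"
    by blast
  define A where "A = real (l0 + k * (L * L * (2 * D)))"
  have A0: "0 \<le> A" unfolding A_def by simp
  have w1: "eventually (\<lambda>n. w n \<le> 1) sequentially"
    using order_tendstoD(2)[OF wl, of 1] by (auto elim: eventually_mono)
  have an: "eventually (\<lambda>n. real n * w n ^ L + A * w n \<le> Lam + A) sequentially"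
    using bnd w1 by eventually_elim (use A0 w0 in \<open>auto intro!: add_mono mult_left_le\<close>)
  have Bd0: "eventually (\<lambda>n. 0 \<le> Bd) sequentially"
    using Bd by eventually_elim (use Gsum_nn[OF w0] in \<open>auto intro: order_trans\<close>)
  have Grec: "eventually (\<lambda>n. Gsum n (Suc k) (w n) \<le> Gsum n k (w n) * (real n * w n ^ L + A * w n)) sequentially"
    using w1 by eventually_elim (use G_rec[OF w0 _ D] A_def in auto)
  have Brec: "eventually (\<lambda>n. Bsum l0 D n (Suc k) (w n) \<le> Bsum l0 D n k (w n) * (real n * w n ^ L + A * w n)
     + Gsum n k (w n) * (A * w n)) sequentially"
    using w1 by eventually_elim (use B_rec[OF w0 _ D] A_def in auto)
  have G1: "eventually (\<lambda>n. Gsum n (Suc k) (w n) \<le> Bd * (Lam + A)) sequentially"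
    using Grec Bd an w1 Bd0
  proof eventually_elim
    case (elim n)
    have "Gsum n k (w n) * (real n * w n ^ L + A * w n) \<le> Bd * (Lam + A)"
      by (rule mult_mono) (use elim Gsum_nn[OF w0] A0 w0 in auto)
    then show ?case using elim by linarith
  qed
  have B1: "eventually (\<lambda>n. Bsum l0 D n (Suc k) (w n) \<le> Bsum l0 D n k (w n) * (Lam + A) + Bd * (A * w n)) sequentially"
    using Brec Bd an w1
  proof eventually_elim
    case (elim n)
    have "Bsum l0 D n k (w n) * (real n * w n ^ L + A * w n) \<le> Bsum l0 D n k (w n) * (Lam + A)"
      by (rule mult_left_mono) (use elim Bsum_nn[OF w0] in auto)
    moreover have "Gsum n k (w n) * (A * w n) \<le> Bd * (A * w n)"
      by (rule mult_right_mono) (use elim A0 w0 in auto)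
    ultimately show ?case using elim by linarith
  qed
  have lim: "(\<lambda>n. Bsum l0 D n k (w n) * (Lam + A) + Bd * (A * w n)) \<longlonglongrightarrow> 0"
    using tendsto_add[OF tendsto_mult_left_zero[OF Bk] tendsto_mult_right_zero[OF tendsto_mult_right_zero[OF wl]]]
    by simp
  have "(\<lambda>n. Bsum l0 D n (Suc k) (w n)) \<longlonglongrightarrow> 0"
    by (rule tendsto_sandwich[OF _ B1 tendsto_const lim]) (use Bsum_nn[OF w0] in auto)
  then show ?case using G1 by blast
qed

end

lemma alt_sum: assumes m: "m \<ge> 1"
  shows "(\<Sum>i\<le>t. (-1)^i * real (m choose i)) = (-1)^t * real ((m - 1) choose t)"
proof (induction t)
  case 0 then show ?case by simp
next
  case (Suc t)
  obtain m' where m': "m = Suc m'" using m by (cases m) auto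
  have "(\<Sum>i\<le>Suc t. (-1)^i * real (m choose i)) = (-1)^t * real (m' choose t) + (-1)^Suc t * real (m choose Suc t)"
    using Suc m' by simp
  also have "real (m choose Suc t) = real (m' choose t) + real (m' choose Suc t)" using m' by simp
  finally show ?case using m' by (simp add: algebra_simps)
qed

lemma choose_prod_id: "((k + i) choose k) * (s choose (k + i)) = (s choose k) * ((s - k) choose i)"
proof (cases "k + i \<le> s")
  case True
  then show ?thesis using choose_mult[of k "k + i" s] by (simp add: mult.commute)
next
  case False
  then have "s choose (k + i) = 0" by simp
  moreover have "(s choose k) * ((s - k) choose i) = 0"
  proof (cases "k \<le> s")
    case True then have "s - k < i" using False by simp
    then show ?thesis by simp
  next
    case False then show ?thesis by simp
  qed
  ultimately show ?thesis by (metis mult_0_right)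
qed

lemma bonf_sum: "(\<Sum>i\<le>t. (-1)^i * real ((k + i) choose k) * real (s choose (k + i)))
    = real (s choose k) * (\<Sum>i\<le>t. (-1)^i * real ((s - k) choose i))"
proof -
  have "(\<Sum>i\<le>t. (-1)^i * real ((k + i) choose k) * real (s choose (k + i)))
      = (\<Sum>i\<le>t. (-1)^i * real (((k + i) choose k) * (s choose (k + i))))"
    by (simp add: mult.assoc)
  also have "\<dots> = (\<Sum>i\<le>t. real (s choose k) * ((-1)^i * real ((s - k) choose i)))"
    unfolding choose_prod_id by (simp add: mult_ac)
  finally show ?thesis by (simp add: sum_distrib_left)
qed

lemma bonf:
  shows "even t \<Longrightarrow> (if s = k then 1 else 0) \<le> (\<Sum>i\<le>t. (-1)^i * real ((k + i) choose k) * real (s choose (k + i)))"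
    and "odd t \<Longrightarrow> (\<Sum>i\<le>t. (-1)^i * real ((k + i) choose k) * real (s choose (k + i))) \<le> (if s = k then 1 else 0)"
proof -
  have cases: "(\<Sum>i\<le>t. (-1)^i * real ((k + i) choose k) * real (s choose (k + i))) =
     (if s < k then 0 else if s = k then 1 else real (s choose k) * ((-1)^t * real ((s - k - 1) choose t)))"
  proof -
    have "s = k \<Longrightarrow> (\<Sum>i\<le>t. (-1)^i * real ((0::nat) choose i)) = (1::real)"
      by (induction t) auto
    then show ?thesis unfolding bonf_sum using alt_sum[of "s - k" t] by auto
  qed
  show "even t \<Longrightarrow> (if s = k then 1 else 0) \<le> (\<Sum>i\<le>t. (-1)^i * real ((k + i) choose k) * real (s choose (k + i)))"
    unfolding cases by auto
  show "odd t \<Longrightarrow> (\<Sum>i\<le>t. (-1)^i * real ((k + i) choose k) * real (s choose (k + i))) \<le> (if s = k then 1 else 0)"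
    unfolding cases by auto
qed

lemma binom_lim: "(\<lambda>n. real (n choose k) / real n ^ k) \<longlonglongrightarrow> 1 / fact k"
proof -
  have eq: "real (n choose k) / real n ^ k = (\<Prod>i=0..<k. (real n - real i) / real n) / fact k" if "n > 0" for n
  proof -
    have "real (n choose k) = (\<Prod>i=0..<k. real n - real i) / fact k"
      by (simp add: binomial_gbinomial gbinomial_prod_rev)
    moreover have "(\<Prod>i=0..<k. (real n - real i) / real n) = (\<Prod>i=0..<k. real n - real i) / real n ^ k"
      by (simp add: prod_dividef)
    ultimately show ?thesis by simp
  qed
  have "(\<lambda>n. (\<Prod>i=0..<k. (real n - real i) / real n) / fact k) \<longlonglongrightarrow> (\<Prod>i=0..<k. 1) / fact k"
  proof (intro tendsto_divide tendsto_prod tendsto_const)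
    fix i
    have "(\<lambda>n. 1 - real i * inverse (real n)) \<longlonglongrightarrow> 1 - real i * 0"
      by (intro tendsto_intros lim_inverse_n)
    moreover have "eventually (\<lambda>n. 1 - real i * inverse (real n) = (real n - real i) / real n) sequentially"
      using eventually_gt_at_top[of 0] by eventually_elim (simp add: field_simps)
    ultimately show "(\<lambda>n. (real n - real i) / real n) \<longlonglongrightarrow> 1"
      using Lim_transform_eventually by force
  qed simp
  then have "(\<lambda>n. (\<Prod>i=0..<k. (real n - real i) / real n) / fact k) \<longlonglongrightarrow> 1 / fact k" by simp
  moreover have "eventually (\<lambda>n. (\<Prod>i=0..<k. (real n - real i) / real n) / fact k = real (n choose k) / real n ^ k) sequentially"
    using eventually_gt_at_top[of 0] by eventually_elim (simp add: eq)
  ultimately show ?thesis using Lim_transform_eventually by force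
qed

lemma sandwich_eps:
  fixes f :: "nat \<Rightarrow> real"
  assumes H: "\<And>eta. eta > 0 \<Longrightarrow> \<exists>lo up a b. eventually (\<lambda>n. lo n \<le> f n \<and> f n \<le> up n) sequentially
      \<and> lo \<longlonglongrightarrow> a \<and> up \<longlonglongrightarrow> b \<and> c - eta \<le> a \<and> b \<le> c + eta"
  shows "f \<longlonglongrightarrow> c"
proof (rule order_tendstoI)
  fix y assume y: "y < c"
  obtain lo up a b where h: "eventually (\<lambda>n. lo n \<le> f n \<and> f n \<le> up n) sequentially"
    "lo \<longlonglongrightarrow> a" "up \<longlonglongrightarrow> b" "c - (c - y) / 2 \<le> a" "b \<le> c + (c - y) / 2"
    using H[of "(c - y) / 2"] y by auto
  have ya: "y < a" using h(4) y by (auto simp: field_simps)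
  have "eventually (\<lambda>n. y < lo n) sequentially" by (rule order_tendstoD(1)[OF h(2) ya])
  then show "eventually (\<lambda>n. y < f n) sequentially" using h(1) by eventually_elim auto
next
  fix y assume y: "c < y"
  obtain lo up a b where h: "eventually (\<lambda>n. lo n \<le> f n \<and> f n \<le> up n) sequentially"
    "lo \<longlonglongrightarrow> a" "up \<longlonglongrightarrow> b" "c - (y - c) / 2 \<le> a" "b \<le> c + (y - c) / 2"
    using H[of "(y - c) / 2"] y by auto
  have yb: "b < y" using h(5) y by (auto simp: field_simps)
  have "eventually (\<lambda>n. up n < y) sequentially" by (rule order_tendstoD(2)[OF h(3) yb])
  then show "eventually (\<lambda>n. f n < y) sequentially" using h(1) by eventually_elim auto
qed

lemma ind_nat_meas: "A \<in> sets N \<Longrightarrow> (indicator A :: _ \<Rightarrow> nat) \<in> N \<rightarrow>\<^sub>M count_space UNIV"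
proof -
  assume A: "A \<in> sets N"
  have "indicator A = (\<lambda>x. if x \<in> A then 1::nat else 0)" by (auto simp: indicator_def fun_eq_iff)
  moreover have "(\<lambda>x. if x \<in> A then 1::nat else 0) \<in> N \<rightarrow>\<^sub>M count_space UNIV"
    by (rule measurable_If_set) (use A in auto)
  ultimately show ?thesis by simp
qed
context mc begin
lemma "(\<And>l. E l \<in> sets P) \<Longrightarrow> {\<omega> \<in> space P. (\<Sum>l=1..n. (indicator (E l) \<omega> :: nat)) = k} \<in> sets P"
  using ind_nat_meas[of "E _" P] by measurable
end

locale full = doeb M K m n0 C mu + mc M K P X nu + qsys L q
  for M :: "'a measure" and K m n0 C mu and P :: "'w measure" and X nu L q +
  fixes Gam :: "nat \<Rightarrow> 'a set" and lam :: real
  assumes Gam: "\<And>n. Gam n \<in> sets M"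
    and q_gap: "\<And>i. 1 \<le> i \<Longrightarrow> i < L \<Longrightarrow> filterlim (\<lambda>l. q (Suc i) l - q i l) at_top sequentially"
    and lim: "(\<lambda>n. real n * (measure mu (Gam n)) ^ L) \<longlonglongrightarrow> lam"
    and lam: "lam > 0"
begin

definition p :: "nat \<Rightarrow> real" where "p n = measure mu (Gam n)"
definition w :: "nat \<Rightarrow> real" where "w n = C^2 * p n"
definition FT :: "nat \<Rightarrow> nat set \<Rightarrow> real" where "FT n T = measure P (EV (Gam n) (Ut T))"
definition fm :: "nat \<Rightarrow> nat \<Rightarrow> real" where "fm n k = (\<Sum>T\<in>Tset n k. FT n T)"
definition Sv :: "nat \<Rightarrow> 'w \<Rightarrow> nat" where
  "Sv n \<omega> = (\<Sum>l=1..n. \<Prod>j=1..L. (indicator (Gam n) (X (q j l) \<omega>) :: nat))"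

lemma p_nn: "0 \<le> p n" unfolding p_def by simp
lemma p_le1: "p n \<le> 1" unfolding p_def using prob_space.prob_le_1[OF mu(1)] by simp
lemma w_nn: "0 \<le> w n" unfolding w_def using p_nn by simp
lemma p_le_w: "p n \<le> w n"
proof -
  have "1 \<le> C^2" using C_ge1 by (simp add: one_le_power)
  then show ?thesis unfolding w_def using p_nn mult_right_mono[of 1 "C^2" "p n"] by simp
qed

lemma pL_lim: "(\<lambda>n. p n ^ L) \<longlonglongrightarrow> 0"
proof -
  have "(\<lambda>n. (real n * p n ^ L) * inverse (real n)) \<longlonglongrightarrow> lam * 0"
    using tendsto_mult[OF lim lim_inverse_n] unfolding p_def .
  moreover have "eventually (\<lambda>n. (real n * p n ^ L) * inverse (real n) = p n ^ L) sequentially"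
    using eventually_gt_at_top[of 0] by eventually_elim simp
  ultimately show ?thesis using Lim_transform_eventually by force
qed

lemma p_lim: "p \<longlonglongrightarrow> 0"
proof -
  have "(\<lambda>n. root L (p n ^ L)) \<longlonglongrightarrow> root L 0" by (rule tendsto_real_root[OF pL_lim])
  moreover have "root L (p n ^ L) = p n" for n using real_root_pos2[OF _ p_nn, of L] L1 by simp
  ultimately show ?thesis by simp
qed

lemma w_lim: "w \<longlonglongrightarrow> 0"
  unfolding w_def using tendsto_mult_right_zero[OF p_lim] by simp

lemma w_bnd: "eventually (\<lambda>n. real n * w n ^ L \<le> C^(2*L) * lam + 1) sequentially"
proof -
  have "(\<lambda>n. C^(2*L) * (real n * p n ^ L)) \<longlonglongrightarrow> C^(2*L) * lam"
    using tendsto_mult_left[OF lim] unfolding p_def .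
  then have "eventually (\<lambda>n. C^(2*L) * (real n * p n ^ L) < C^(2*L) * lam + 1) sequentially"
    by (rule order_tendstoD) simp
  moreover have eq: "real n * w n ^ L = C^(2*L) * (real n * p n ^ L)" for n
  proof -
    have "w n ^ L = C^(2*L) * p n ^ L" unfolding w_def by (simp add: power_mult_distrib power_mult)
    then show ?thesis by simp
  qed
  ultimately show ?thesis
  proof -
    assume ev: "eventually (\<lambda>n. C^(2*L) * (real n * p n ^ L) < C^(2*L) * lam + 1) sequentially"
    show ?thesis using ev
    proof eventually_elim
      case (elim n) then show ?case using eq[of n] by linarith
    qed
  qed
qed

lemma w_le1: "eventually (\<lambda>n. w n \<le> 1) sequentially"
  using order_tendstoD(2)[OF w_lim, of 1] by (auto elim: eventually_mono)

lemma Tset_ge1: "T \<in> Tset n k \<Longrightarrow> \<forall>x\<in>T. 1 \<le> x" using Tset_props by blast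

lemma FT_upper: assumes T: "T \<in> Tset n k" shows "FT n T \<le> w n ^ card (Ut T)"
proof -
  have fT: "finite T" using Tset_props[OF T] by blast
  have "0 ^ card (Ut T) \<le> measure P (EV (Gam n) (Ut T)) \<and> measure P (EV (Gam n) (Ut T)) \<le> w n ^ card (Ut T)"
  proof (rule EV_bound[OF Gam order_refl order_refl])
    fix s :: nat and x assume s: "1 \<le> s" and x: "x \<in> space M"
    show "0 \<le> measure (kstep M K s x) (Gam n) \<and> measure (kstep M K s x) (Gam n) \<le> w n"
      using mixing(2)[OF Gam x s] unfolding w_def p_def by simp
  next
    show "finite (Ut T)" using finite_Ut[OF fT] .
    show "\<forall>t\<in>Ut T. 1 \<le> t" using Ut_ge[OF Tset_ge1[OF T]] by blast
    show "\<forall>t\<in>Ut T. \<forall>t'\<in>Ut T. t < t' \<longrightarrow> 1 \<le> t' - t" by auto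
  qed
  then show ?thesis unfolding FT_def by blast
qed

lemma FT_nn: "0 \<le> FT n T" unfolding FT_def by simp

lemma FT_good:
  assumes T: "T \<in> Tset n k" and nb: "\<not> bad l0 D T" and Dl: "D \<le> l0" and D: "1 \<le> D"
    and gap: "\<And>l i. l0 \<le> l \<Longrightarrow> 1 \<le> i \<Longrightarrow> i < L \<Longrightarrow> D \<le> q (Suc i) l - q i l"
    and eps: "eps = C^2 * (1 - 1/C)^((D - 1) div n0)" and eps1: "eps \<le> 1"
  shows "((1 - eps) * p n) ^ (L * k) \<le> FT n T \<and> FT n T \<le> ((1 + eps) * p n) ^ (L * k)"
proof -
  have fT: "finite T" using Tset_props[OF T] by blast
  have sep: "\<forall>t\<in>Ut T. D \<le> t" "\<forall>t\<in>Ut T. \<forall>t'\<in>Ut T. t < t' \<longrightarrow> D \<le> t' - t" "card (Ut T) = L * k"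
    using good_sep[OF T nb Dl D gap] by auto
  have r0: "0 \<le> 1 - 1/C" "1 - 1/C \<le> 1" using C_ge1 C by (auto simp: field_simps)
  have "((1 - eps) * p n) ^ card (Ut T) \<le> measure P (EV (Gam n) (Ut T)) \<and> measure P (EV (Gam n) (Ut T)) \<le> ((1 + eps) * p n) ^ card (Ut T)"
  proof (rule EV_bound[OF Gam _ D])
    show "0 \<le> (1 - eps) * p n" using eps1 p_nn by simp
    fix s :: nat and x assume s: "D \<le> s" and x: "x \<in> space M"
    have s1: "1 \<le> s" using s D by simp
    have "(1 - 1/C)^((s - 1) div n0) \<le> (1 - 1/C)^((D - 1) div n0)"
      by (rule power_decreasing[OF _ r0]) (rule div_le_mono, use s in simp)
    then have "C^2 * (1 - 1/C)^((s - 1) div n0) * p n \<le> eps * p n"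
      unfolding eps using p_nn by (intro mult_right_mono) (auto intro: mult_left_mono)
    moreover have "\<bar>measure (kstep M K s x) (Gam n) - p n\<bar> \<le> C^2 * (1 - 1/C)^((s - 1) div n0) * p n"
      using mixing(1)[OF Gam[of n] x s1] unfolding p_def .
    ultimately have ab: "\<bar>measure (kstep M K s x) (Gam n) - p n\<bar> \<le> eps * p n" by linarith
    have e1: "(1 - eps) * p n = p n - eps * p n" and e2: "(1 + eps) * p n = p n + eps * p n" by (simp_all add: algebra_simps)
    show "(1 - eps) * p n \<le> measure (kstep M K s x) (Gam n) \<and> measure (kstep M K s x) (Gam n) \<le> (1 + eps) * p n"
      unfolding e1 e2 using ab by (simp add: abs_le_iff)
  next
    show "finite (Ut T)" using finite_Ut[OF fT] .
  qed (use sep in auto)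
  then show ?thesis unfolding FT_def sep(3) .
qed

lemma EV_Ut: "\<omega> \<in> EV G (Ut T) \<longleftrightarrow> \<omega> \<in> space P \<and> (\<forall>l\<in>T. \<forall>j\<in>{1..L}. X (q j l) \<omega> \<in> G)"
  unfolding EV_def Ut_def by auto

lemma EV_sets': "finite T \<Longrightarrow> EV (Gam n) (Ut T) \<in> sets P"
  using EV_sets[OF Gam finite_Ut] by blast

lemma prod_ind: assumes w: "\<omega> \<in> space P"
  shows "(\<Prod>j=1..L. (indicator G (X (q j l) \<omega>) :: nat)) = indicator (EV G (Ut {l})) \<omega>"
proof (cases "\<forall>j\<in>{1..L}. X (q j l) \<omega> \<in> G")
  case True
  then have "(\<Prod>j=1..L. (indicator G (X (q j l) \<omega>) :: nat)) = (\<Prod>j=1..L. 1)"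
    by (intro prod.cong) auto
  moreover have "\<omega> \<in> EV G (Ut {l})" using True w EV_Ut by auto
  ultimately show ?thesis by simp
next
  case False
  then obtain j where j: "j \<in> {1..L}" "X (q j l) \<omega> \<notin> G" by blast
  have "(\<Prod>j=1..L. (indicator G (X (q j l) \<omega>) :: nat)) = 0"
    by (rule prod_zero) (use j in \<open>auto intro!: bexI[of _ j]\<close>)
  moreover have "\<omega> \<notin> EV G (Ut {l})" using j EV_Ut by auto
  ultimately show ?thesis by simp
qed

lemma sum_ind_card: "finite A \<Longrightarrow> (\<Sum>l\<in>A. (indicator (E l) \<omega> :: nat)) = card {l\<in>A. \<omega> \<in> E l}"
proof -
  assume A: "finite A"
  have "(\<Sum>l\<in>A. (indicator (E l) \<omega> :: nat)) = (\<Sum>l\<in>A. if \<omega> \<in> E l then 1 else 0)"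
    by (rule sum.cong) (auto simp: indicator_def)
  also have "\<dots> = (\<Sum>l\<in>{l\<in>A. \<omega> \<in> E l}. 1)" by (rule sum.inter_filter[OF A, symmetric])
  finally show ?thesis by simp
qed

lemma sum_ind_card_real: "finite A \<Longrightarrow> (\<Sum>l\<in>A. (indicator (E l) \<omega> :: real)) = real (card {l\<in>A. \<omega> \<in> E l})"
proof -
  assume A: "finite A"
  have "(\<Sum>l\<in>A. (indicator (E l) \<omega> :: real)) = (\<Sum>l\<in>A. if \<omega> \<in> E l then 1 else 0)"
    by (rule sum.cong) (auto simp: indicator_def)
  also have "\<dots> = (\<Sum>l\<in>{l\<in>A. \<omega> \<in> E l}. 1)" by (rule sum.inter_filter[OF A, symmetric])
  finally show ?thesis by simp
qed

lemma int_ind: "A \<in> sets P \<Longrightarrow> integrable P (indicator A :: 'w \<Rightarrow> real)"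
proof -
  assume A: "A \<in> sets P"
  interpret P: prob_space P by (rule P_prob)
  show ?thesis by (rule integrable_real_indicator[OF A]) (simp add: P.emeasure_eq_measure)
qed

lemma Sv_alt: "\<omega> \<in> space P \<Longrightarrow> Sv n \<omega> = (\<Sum>l=1..n. (indicator (EV (Gam n) (Ut {l})) \<omega> :: nat))"
  unfolding Sv_def by (intro sum.cong refl prod_ind)

lemma Sv_choose: assumes w: "\<omega> \<in> space P"
  shows "real (Sv n \<omega> choose k) = (\<Sum>T\<in>Tset n k. indicator (EV (Gam n) (Ut T)) \<omega>)"
proof -
  define W where "W = {l\<in>{1..n}. \<omega> \<in> EV (Gam n) (Ut {l})}"
  have SW: "Sv n \<omega> = card W" unfolding Sv_alt[OF w] W_def by (rule sum_ind_card) simp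
  have fW: "finite W" unfolding W_def by simp
  have eq: "{T. T \<subseteq> W \<and> card T = k} = {T\<in>Tset n k. \<omega> \<in> EV (Gam n) (Ut T)}"
  proof -
    have "T \<subseteq> W \<longleftrightarrow> T \<subseteq> {1..n} \<and> \<omega> \<in> EV (Gam n) (Ut T)" for T
      unfolding W_def using w by (auto simp: EV_Ut)
    then show ?thesis unfolding Tset_def by auto
  qed
  have "real (Sv n \<omega> choose k) = real (card {T\<in>Tset n k. \<omega> \<in> EV (Gam n) (Ut T)})"
    unfolding SW n_subsets[OF fW, symmetric] eq ..
  also have "\<dots> = (\<Sum>T\<in>Tset n k. indicator (EV (Gam n) (Ut T)) \<omega>)"
    by (rule sum_ind_card_real[symmetric]) (rule finite_Tset)
  finally show ?thesis .
qed

lemma Tset_fin_el: "T \<in> Tset n k \<Longrightarrow> finite T" using Tset_props by blast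

lemma integrable_Sv: "integrable P (\<lambda>\<omega>. real (Sv n \<omega> choose k))"
proof -
  interpret P: prob_space P by (rule P_prob)
  have i: "integrable P (\<lambda>\<omega>. \<Sum>T\<in>Tset n k. indicator (EV (Gam n) (Ut T)) \<omega> :: real)"
    by (rule Bochner_Integration.integrable_sum) (auto intro!: int_ind EV_sets' Tset_fin_el)
  have "integrable P (\<lambda>\<omega>. \<Sum>T\<in>Tset n k. indicator (EV (Gam n) (Ut T)) \<omega> :: real) = integrable P (\<lambda>\<omega>. real (Sv n \<omega> choose k))"
    by (rule Bochner_Integration.integrable_cong) (simp_all add: Sv_choose)
  then show ?thesis using i by simp
qed

lemma fm_eq: "(\<integral>\<omega>. real (Sv n \<omega> choose k) \<partial>P) = fm n k"
proof -
  interpret P: prob_space P by (rule P_prob)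
  have "(\<integral>\<omega>. real (Sv n \<omega> choose k) \<partial>P) = (\<integral>\<omega>. (\<Sum>T\<in>Tset n k. indicator (EV (Gam n) (Ut T)) \<omega>) \<partial>P)"
    by (rule Bochner_Integration.integral_cong[OF refl]) (simp add: Sv_choose)
  also have "\<dots> = (\<Sum>T\<in>Tset n k. (\<integral>\<omega>. indicator (EV (Gam n) (Ut T)) \<omega> \<partial>P))"
    by (rule Bochner_Integration.integral_sum) (auto intro!: int_ind EV_sets' Tset_fin_el)
  also have "\<dots> = fm n k"
    unfolding fm_def FT_def
  proof (rule sum.cong[OF refl])
    fix T assume "T \<in> Tset n k"
    then have "EV (Gam n) (Ut T) \<in> sets P" using EV_sets' Tset_fin_el by blast
    then show "(\<integral>\<omega>. indicator (EV (Gam n) (Ut T)) \<omega> \<partial>P) = measure P (EV (Gam n) (Ut T))"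
      by (simp add: sets.Int_space_eq2)
  qed
  finally show ?thesis .
qed

lemma Sv_set: "{\<omega> \<in> space P. Sv n \<omega> = k} \<in> sets P"
proof -
  have "{\<omega> \<in> space P. Sv n \<omega> = k} = {\<omega> \<in> space P. (\<Sum>l=1..n. (indicator (EV (Gam n) (Ut {l})) \<omega> :: nat)) = k}"
    using Sv_alt by auto
  also have "\<dots> \<in> sets P"
  proof -
    have "\<And>l. (indicator (EV (Gam n) (Ut {l})) :: 'w \<Rightarrow> nat) \<in> P \<rightarrow>\<^sub>M count_space UNIV"
      by (rule ind_nat_meas, rule EV_sets') simp
    then show ?thesis by measurable
  qed
  finally show ?thesis .
qed

lemma bonf_int:
  shows "even t \<Longrightarrow> measure P {\<omega> \<in> space P. Sv n \<omega> = k} \<le> (\<Sum>i\<le>t. (-1)^i * real ((k + i) choose k) * fm n (k + i))"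
    and "odd t \<Longrightarrow> (\<Sum>i\<le>t. (-1)^i * real ((k + i) choose k) * fm n (k + i)) \<le> measure P {\<omega> \<in> space P. Sv n \<omega> = k}"
proof -
  interpret P: prob_space P by (rule P_prob)
  define S where "S = {\<omega> \<in> space P. Sv n \<omega> = k}"
  have SS: "S \<in> sets P" unfolding S_def by (rule Sv_set)
  have m: "measure P S = (\<integral>\<omega>. (if Sv n \<omega> = k then 1 else 0) \<partial>P)"
  proof -
    have "measure P S = (\<integral>\<omega>. indicator S \<omega> \<partial>P)" using SS by (simp add: sets.Int_space_eq2)
    also have "\<dots> = (\<integral>\<omega>. (if Sv n \<omega> = k then 1 else 0) \<partial>P)"
      by (rule Bochner_Integration.integral_cong[OF refl]) (auto simp: S_def indicator_def)
    finally show ?thesis .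
  qed
  have i1: "integrable P (\<lambda>\<omega>. (if Sv n \<omega> = k then 1 else 0) :: real)"
  proof -
    have i: "integrable P (indicator S :: 'w \<Rightarrow> real)" using int_ind[OF SS] .
    have "integrable P (indicator S :: 'w \<Rightarrow> real) = integrable P (\<lambda>\<omega>. (if Sv n \<omega> = k then 1 else 0) :: real)"
      by (rule Bochner_Integration.integrable_cong) (auto simp: S_def indicator_def)
    then show ?thesis using i by simp
  qed
  have i2: "integrable P (\<lambda>\<omega>. \<Sum>i\<le>t. (-1)^i * real ((k + i) choose k) * real (Sv n \<omega> choose (k + i)))"
    by (intro Bochner_Integration.integrable_sum integrable_mult_right integrable_Sv)
  have e2: "(\<integral>\<omega>. (\<Sum>i\<le>t. (-1)^i * real ((k + i) choose k) * real (Sv n \<omega> choose (k + i))) \<partial>P)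
      = (\<Sum>i\<le>t. (-1)^i * real ((k + i) choose k) * fm n (k + i))"
    by (subst Bochner_Integration.integral_sum) (auto intro!: integrable_mult_right integrable_Sv simp: fm_eq)
  show "even t \<Longrightarrow> measure P {\<omega> \<in> space P. Sv n \<omega> = k} \<le> (\<Sum>i\<le>t. (-1)^i * real ((k + i) choose k) * fm n (k + i))"
    unfolding S_def[symmetric] m e2[symmetric]
    by (rule integral_mono[OF i1 i2]) (rule bonf(1))
  show "odd t \<Longrightarrow> (\<Sum>i\<le>t. (-1)^i * real ((k + i) choose k) * fm n (k + i)) \<le> measure P {\<omega> \<in> space P. Sv n \<omega> = k}"
    unfolding S_def[symmetric] m e2[symmetric]
    by (rule integral_mono[OF i2 i1]) (rule bonf(2))
qed

end

context full begin

lemma card_Tset: "card (Tset n k) = n choose k"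
  unfolding Tset_def using n_subsets[of "{1..n}" k] by simp

lemma fm_bounds:
  assumes D: "1 \<le> D" and Dl: "D \<le> l0"
    and gap: "\<And>l i. l0 \<le> l \<Longrightarrow> 1 \<le> i \<Longrightarrow> i < L \<Longrightarrow> D \<le> q (Suc i) l - q i l"
    and eps: "eps = C^2 * (1 - 1/C)^((D - 1) div n0)" and eps1: "eps \<le> 1" and w1: "w n \<le> 1"
  shows "(1 - eps)^(L*k) * (real (n choose k) * p n ^ (L*k)) - Bsum l0 D n k (w n) \<le> fm n k
       \<and> fm n k \<le> (1 + eps)^(L*k) * (real (n choose k) * p n ^ (L*k)) + Bsum l0 D n k (w n)"
proof -
  have eps0: "0 \<le> eps" unfolding eps using C_ge1 by (simp add: field_simps)
  have up: "FT n T \<le> (if bad l0 D T then w n ^ card (Ut T) else 0) + ((1 + eps) * p n) ^ (L*k)"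
    if T: "T \<in> Tset n k" for T
  proof (cases "bad l0 D T")
    case True
    have "0 \<le> ((1 + eps) * p n) ^ (L*k)" using eps0 p_nn by simp
    then show ?thesis using True FT_upper[OF T] by simp
  next
    case False
    then show ?thesis using FT_good[OF T False Dl D gap eps eps1] by simp
  qed
  have lo: "((1 - eps) * p n) ^ (L*k) - (if bad l0 D T then w n ^ card (Ut T) else 0) \<le> FT n T"
    if T: "T \<in> Tset n k" for T
  proof (cases "bad l0 D T")
    case True
    have a: "((1 - eps) * p n) ^ (L*k) \<le> p n ^ (L*k)"
    proof (rule power_mono)
      show "(1 - eps) * p n \<le> p n" using mult_right_mono[of "1 - eps" 1 "p n"] eps0 p_nn[of n] by simp
      show "0 \<le> (1 - eps) * p n" using eps1 p_nn[of n] by simp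
    qed
    have b: "p n ^ (L*k) \<le> w n ^ (L*k)" by (rule power_mono[OF p_le_w p_nn])
    have "card (Ut T) \<le> L * card T" by (rule card_Ut_le[OF Tset_fin_el[OF T]])
    then have "card (Ut T) \<le> L * k" using Tset_props[OF T] by simp
    then have c: "w n ^ (L*k) \<le> w n ^ card (Ut T)" by (rule power_decreasing[OF _ w_nn w1])
    show ?thesis using True a b c FT_nn[of n T] by simp
  next
    case False
    then show ?thesis using FT_good[OF T False Dl D gap eps eps1] by simp
  qed
  have "fm n k \<le> (\<Sum>T\<in>Tset n k. (if bad l0 D T then w n ^ card (Ut T) else 0) + ((1 + eps) * p n) ^ (L*k))"
    unfolding fm_def by (rule sum_mono) (rule up)
  also have "\<dots> = Bsum l0 D n k (w n) + (1 + eps)^(L*k) * (real (n choose k) * p n ^ (L*k))"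
    by (simp add: sum.distrib Bsum_def card_Tset power_mult_distrib mult_ac)
  finally have U: "fm n k \<le> (1 + eps)^(L*k) * (real (n choose k) * p n ^ (L*k)) + Bsum l0 D n k (w n)" by simp
  have "(\<Sum>T\<in>Tset n k. ((1 - eps) * p n) ^ (L*k) - (if bad l0 D T then w n ^ card (Ut T) else 0)) \<le> fm n k"
    unfolding fm_def by (rule sum_mono) (rule lo)
  moreover have "(\<Sum>T\<in>Tset n k. ((1 - eps) * p n) ^ (L*k) - (if bad l0 D T then w n ^ card (Ut T) else 0))
      = (1 - eps)^(L*k) * (real (n choose k) * p n ^ (L*k)) - Bsum l0 D n k (w n)"
    by (simp add: sum_subtractf Bsum_def card_Tset power_mult_distrib mult_ac)
  ultimately show ?thesis using U by simp
qed

lemma binp_lim: "(\<lambda>n. real (n choose k) * p n ^ (L*k)) \<longlonglongrightarrow> lam^k / fact k"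
proof -
  have "(\<lambda>n. (real (n choose k) / real n ^ k) * (real n * p n ^ L)^k) \<longlonglongrightarrow> (1 / fact k) * lam^k"
    by (intro tendsto_mult binom_lim tendsto_power) (use lim in \<open>simp add: p_def\<close>)
  moreover have "eventually (\<lambda>n. (real (n choose k) / real n ^ k) * (real n * p n ^ L)^k = real (n choose k) * p n ^ (L*k)) sequentially"
    using eventually_gt_at_top[of 0]
    by eventually_elim (simp add: power_mult_distrib power_mult[symmetric] mult.commute[of L k])
  ultimately show ?thesis using Lim_transform_eventually by force
qed

lemma eps_lim: "(\<lambda>D. C^2 * (1 - 1/C)^((D - 1) div n0)) \<longlonglongrightarrow> 0"
proof -
  have r: "norm (1 - 1/C) < 1" using C_ge1 by (auto simp: field_simps)
  have f: "filterlim (\<lambda>D::nat. (D - 1) div n0) at_top sequentially"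
    unfolding filterlim_at_top
  proof
    fix Z :: nat
    show "eventually (\<lambda>D. Z \<le> (D - 1) div n0) sequentially"
      using eventually_ge_at_top[of "Z * n0 + 1"]
    proof eventually_elim
      case (elim D)
      then have "Z * n0 \<le> D - 1" by simp
      then have "Z * n0 div n0 \<le> (D - 1) div n0" by (rule div_le_mono)
      then show ?case using n0 by simp
    qed
  qed
  have "(\<lambda>D. (1 - 1/C)^((D - 1) div n0)) \<longlonglongrightarrow> 0"
    by (rule filterlim_compose[OF LIMSEQ_power_zero[OF r] f])
  then show ?thesis using tendsto_mult_right_zero by blast
qed

lemma fm_lim: "(\<lambda>n. fm n k) \<longlonglongrightarrow> lam^k / fact k"
proof (rule sandwich_eps)
  fix eta :: real assume eta: "eta > 0"
  define c0 where "c0 = lam^k / fact k"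
  define E where "E D = C^2 * (1 - 1/C)^((D - 1) div n0)" for D :: nat
  have El: "E \<longlonglongrightarrow> 0" unfolding E_def by (rule eps_lim)
  have e1: "(\<lambda>D. (1 + E D)^(L*k) * c0) \<longlonglongrightarrow> (1 + 0)^(L*k) * c0" by (intro tendsto_intros El)
  have e2: "(\<lambda>D. (1 - E D)^(L*k) * c0) \<longlonglongrightarrow> (1 - 0)^(L*k) * c0" by (intro tendsto_intros El)
  have ev: "eventually (\<lambda>D. (1 + E D)^(L*k) * c0 < c0 + eta \<and> c0 - eta < (1 - E D)^(L*k) * c0 \<and> E D \<le> 1 \<and> 1 \<le> D) sequentially"
  proof (intro eventually_conj)
    show "eventually (\<lambda>D. (1 + E D)^(L*k) * c0 < c0 + eta) sequentially"
      by (rule order_tendstoD(2)[OF e1]) (use eta in simp)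
    show "eventually (\<lambda>D. c0 - eta < (1 - E D)^(L*k) * c0) sequentially"
      by (rule order_tendstoD(1)[OF e2]) (use eta in simp)
    show "eventually (\<lambda>D. E D \<le> 1) sequentially"
      using order_tendstoD(2)[OF El, of 1] by (auto elim: eventually_mono)
    show "eventually (\<lambda>D. 1 \<le> D) sequentially" by (rule eventually_ge_at_top)
  qed
  then obtain D where D: "(1 + E D)^(L*k) * c0 < c0 + eta" "c0 - eta < (1 - E D)^(L*k) * c0" "E D \<le> 1" "1 \<le> D"
    unfolding eventually_sequentially by blast
  have "eventually (\<lambda>l. \<forall>i\<in>{1..<L}. D \<le> q (Suc i) l - q i l) sequentially"
  proof (rule eventually_ball_finite)
    show "\<forall>i\<in>{1..<L}. eventually (\<lambda>l. D \<le> q (Suc i) l - q i l) sequentially"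
      using q_gap unfolding filterlim_at_top by auto
  qed simp
  then obtain N2 where N2: "\<And>l. l \<ge> N2 \<Longrightarrow> \<forall>i\<in>{1..<L}. D \<le> q (Suc i) l - q i l"
    unfolding eventually_sequentially by blast
  define l0 where "l0 = max N2 D"
  have Dl: "D \<le> l0" unfolding l0_def by simp
  have gap: "\<And>l i. l0 \<le> l \<Longrightarrow> 1 \<le> i \<Longrightarrow> i < L \<Longrightarrow> D \<le> q (Suc i) l - q i l"
    using N2 unfolding l0_def by auto
  have Bl: "(\<lambda>n. Bsum l0 D n k (w n)) \<longlonglongrightarrow> 0"
    using GB_asym[OF w_nn w_lim w_bnd D(4), of k l0] by blast
  define lo where "lo n = (1 - E D)^(L*k) * (real (n choose k) * p n ^ (L*k)) - Bsum l0 D n k (w n)" for n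
  define up where "up n = (1 + E D)^(L*k) * (real (n choose k) * p n ^ (L*k)) + Bsum l0 D n k (w n)" for n
  have "eventually (\<lambda>n. lo n \<le> fm n k \<and> fm n k \<le> up n) sequentially"
    using w_le1 by eventually_elim (use fm_bounds[OF D(4) Dl gap E_def D(3)] lo_def up_def in auto)
  moreover have "lo \<longlonglongrightarrow> (1 - E D)^(L*k) * c0 - 0"
    unfolding lo_def c0_def by (intro tendsto_intros binp_lim Bl)
  moreover have "up \<longlonglongrightarrow> (1 + E D)^(L*k) * c0 + 0"
    unfolding up_def c0_def by (intro tendsto_intros binp_lim Bl)
  ultimately show "\<exists>lo up a b. eventually (\<lambda>n. lo n \<le> fm n k \<and> fm n k \<le> up n) sequentially
      \<and> lo \<longlonglongrightarrow> a \<and> up \<longlonglongrightarrow> b \<and> lam^k / fact k - eta \<le> a \<and> b \<le> lam^k / fact k + eta"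
    using D(1,2) unfolding c0_def by (intro exI[of _ lo] exI[of _ up] exI[of _ "(1 - E D)^(L*k) * c0 - 0"] exI[of _ "(1 + E D)^(L*k) * c0 + 0"])
      (auto simp: c0_def)
qed

lemma ps_lim: "(\<lambda>t. \<Sum>i\<le>t. (-lam)^i / fact i) \<longlonglongrightarrow> exp (-lam)"
proof -
  have "(\<lambda>n. (-lam)^n /\<^sub>R fact n) sums exp (-lam)" by (rule exp_converges)
  then have "(\<lambda>N. \<Sum>i<N. (-lam)^i / fact i) \<longlonglongrightarrow> exp (-lam)"
    unfolding sums_def by (simp add: divide_inverse mult.commute)
  then have "(\<lambda>t. \<Sum>i<Suc t. (-lam)^i / fact i) \<longlonglongrightarrow> exp (-lam)" by (rule LIMSEQ_Suc)
  then show ?thesis by (simp add: lessThan_Suc_atMost)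
qed

lemma coef_id: "(-1)^i * real ((k + i) choose k) * (lam^(k + i) / fact (k + i)) = lam^k / fact k * ((-lam)^i / fact i)"
proof -
  have c: "real ((k + i) choose k) = fact (k + i) / (fact k * fact i)" using binomial_fact[of k "k + i"] by simp
  have f: "real ((k + i) choose k) / fact (k + i) = 1 / (fact k * fact i)"
    unfolding c by simp
  have "(-1)^i * real ((k + i) choose k) * (lam^(k + i) / fact (k + i))
      = ((-1)^i * lam^i) * lam^k * (real ((k + i) choose k) / fact (k + i))"
    by (simp only: power_add divide_inverse mult_ac)
  also have "\<dots> = lam^k / fact k * ((-lam)^i / fact i)"
    unfolding f power_minus[of lam i] by (simp only: divide_inverse inverse_mult_distrib mult_1_left mult_ac)
  finally show ?thesis .
qed

end

lemma (in full) Pk_lim: "(\<lambda>n. measure P {\<omega> \<in> space P. Sv n \<omega> = k}) \<longlonglongrightarrow> exp (- lam) * lam ^ k / fact k"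
proof (rule sandwich_eps)
  fix eta :: real assume eta: "eta > 0"
  define c0 where "c0 = lam^k / fact k"
  define ps where "ps t = (\<Sum>i\<le>t. (-lam)^i / fact i)" for t
  have tg: "exp (- lam) * lam ^ k / fact k = c0 * exp (-lam)" unfolding c0_def by simp
  have cl: "(\<lambda>t. c0 * ps t) \<longlonglongrightarrow> c0 * exp (-lam)" unfolding ps_def by (intro tendsto_intros ps_lim)
  have "eventually (\<lambda>t. c0 * ps t < c0 * exp (-lam) + eta \<and> c0 * exp (-lam) - eta < c0 * ps t) sequentially"
    using order_tendstoD(2)[OF cl, of "c0 * exp (-lam) + eta"] order_tendstoD(1)[OF cl, of "c0 * exp (-lam) - eta"] eta
    by (auto intro: eventually_conj)
  then obtain N where N: "\<And>t. t \<ge> N \<Longrightarrow> c0 * ps t < c0 * exp (-lam) + eta \<and> c0 * exp (-lam) - eta < c0 * ps t"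
    unfolding eventually_sequentially by blast
  define U where "U t n = (\<Sum>i\<le>t. (-1)^i * real ((k + i) choose k) * fm n (k + i))" for t n
  have Ul: "(\<lambda>n. U t n) \<longlonglongrightarrow> c0 * ps t" for t
  proof -
    have "(\<lambda>n. U t n) \<longlonglongrightarrow> (\<Sum>i\<le>t. (-1)^i * real ((k + i) choose k) * (lam^(k + i) / fact (k + i)))"
      unfolding U_def by (intro tendsto_intros fm_lim)
    also have "(\<Sum>i\<le>t. (-1)^i * real ((k + i) choose k) * (lam^(k + i) / fact (k + i))) = c0 * ps t"
      unfolding ps_def c0_def coef_id by (simp add: sum_distrib_left)
    finally show ?thesis .
  qed
  have ev: "eventually (\<lambda>n. U (2*N+1) n \<le> measure P {\<omega> \<in> space P. Sv n \<omega> = k} \<and> measure P {\<omega> \<in> space P. Sv n \<omega> = k} \<le> U (2*N) n) sequentially"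
  proof (intro always_eventually allI conjI)
    fix n
    show "U (2*N+1) n \<le> measure P {\<omega> \<in> space P. Sv n \<omega> = k}"
      unfolding U_def by (rule bonf_int(2)) simp
    show "measure P {\<omega> \<in> space P. Sv n \<omega> = k} \<le> U (2*N) n"
      unfolding U_def by (rule bonf_int(1)) simp
  qed
  show "\<exists>lo up a b. eventually (\<lambda>n. lo n \<le> measure P {\<omega> \<in> space P. Sv n \<omega> = k} \<and> measure P {\<omega> \<in> space P. Sv n \<omega> = k} \<le> up n) sequentially
      \<and> lo \<longlonglongrightarrow> a \<and> up \<longlonglongrightarrow> b \<and> exp (- lam) * lam ^ k / fact k - eta \<le> a \<and> b \<le> exp (- lam) * lam ^ k / fact k + eta"
    unfolding tg
    using ev Ul[of "2*N+1"] Ul[of "2*N"] N[of "2*N+1"] N[of "2*N"]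
    by (intro exI[of _ "U (2*N+1)"] exI[of _ "U (2*N)"] exI[of _ "c0 * ps (2*N+1)"] exI[of _ "c0 * ps (2*N)"]) auto
qed

theorem theorem2p2:
  fixes M :: "'a measure" and K :: "'a \<Rightarrow> 'a measure"
    and m \<mu> \<nu> :: "'a measure" and n0 :: nat and C :: real
    and P :: "'w measure" and X :: "nat \<Rightarrow> 'w \<Rightarrow> 'a"
    and L :: nat and q :: "nat \<Rightarrow> nat \<Rightarrow> nat"
    and \<Gamma> :: "nat \<Rightarrow> 'a set" and lam :: real
  assumes K: "transition_kernel M K"
    and m: "prob_space m" "sets m = sets M"
    and n0: "n0 \<ge> 1" and C: "C > 0"
    and upper: "\<And>x A. x \<in> space M \<Longrightarrow> A \<in> sets M \<Longrightarrow> measure (K x) A \<le> C * measure m A"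
    and lower: "\<And>x A. x \<in> space M \<Longrightarrow> A \<in> sets M \<Longrightarrow> measure (kstep M K n0 x) A \<ge> measure m A / C"
    and mu: "prob_space \<mu>" "sets \<mu> = sets M"
    and mu_inv: "\<And>A. A \<in> sets M \<Longrightarrow> (\<integral>x. measure (K x) A \<partial>\<mu>) = measure \<mu> A"
    and nu: "prob_space \<nu>" "sets \<nu> = sets M"
    and chain: "markov_chain P M K \<nu> X"
    and ell: "L \<ge> 1"
    and q_incr: "\<And>j l. 1 \<le> j \<Longrightarrow> j \<le> L \<Longrightarrow> 1 \<le> l \<Longrightarrow> q j l < q j (Suc l)"
    and q_first: "\<And>l. 1 \<le> l \<Longrightarrow> l \<le> q 1 l"
    and q_order: "\<And>j l. 1 \<le> j \<Longrightarrow> j < L \<Longrightarrow> 1 \<le> l \<Longrightarrow> q j l < q (Suc j) l"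
    and q_gap: "\<And>i. 1 \<le> i \<Longrightarrow> i < L \<Longrightarrow> filterlim (\<lambda>l. q (Suc i) l - q i l) at_top sequentially"
    and Gamma: "\<And>n. \<Gamma> n \<in> sets M"
    and lim: "(\<lambda>n. real n * (measure \<mu> (\<Gamma> n)) ^ L) \<longlonglongrightarrow> lam"
    and lam: "lam > 0"
  shows "\<forall>k::nat. (\<lambda>n. measure P {\<omega> \<in> space P.
            (\<Sum>l=1..n. \<Prod>j=1..L. (indicator (\<Gamma> n) (X (q j l) \<omega>) :: nat)) = k})
          \<longlonglongrightarrow> exp (- lam) * lam ^ k / fact k"
proof -
  have k: "kern M K" by (rule kern.intro) (use K in \<open>simp add: transition_kernel_def\<close>)
  have d: "doeb M K m n0 C \<mu>"
    by (rule doeb.intro[OF k], rule doeb_axioms.intro) (fact m n0 C upper lower mu mu_inv)+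
  have c: "mc M K P X \<nu>" by (rule mc.intro[OF k], rule mc_axioms.intro) (fact chain)
  have qs: "qsys L q" by (rule qsys.intro) (fact ell q_incr q_first q_order)+
  interpret full M K m n0 C \<mu> P X \<nu> L q \<Gamma> lam
    by (rule full.intro[OF d c qs], rule full_axioms.intro) (fact q_gap Gamma lim lam)+
  show ?thesis using Pk_lim unfolding Sv_def by blast
qed


end
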